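(* Let $m\ge2$ facilities all have capacity $k$, with $mk<n$. Let $\vec v\in[0,1]^m$ with $v_1<v_2<\dots<v_m$, and assume $\lfloor v_{j+1}(n-1)\rfloor-\lfloor v_j(n-1)\rfloor>1$ for every $j\in\{1,\dots,m-1\}$. Then $\mathcal{PM}_{\vec v}$ is Equilibrium Stable if and only if $\lfloor v_{j+1}(n-1)\rfloor-\lfloor v_j(n-1)\rfloor\ge 2k-1$ for every $j\in\{1,\dots,m-1\}$.
   Context: There are $n$ agents with positions $\vec x\in[0,1]^n$ and $m$ facilities; a location $\vec y=(y_1,\dots,y_m)$ places facility $j$ at $y_j$. A fixed priority order breaks ties. FCFS game induced by $(\vec x,\vec y)$ with capacities $k_1,\dots,k_m$ (here all equal to $k$): each agent $i$ chooses $s_i\in\{1,\dots,m\}$; $\mathcal S_j$ = agents choosing $j$; $T_j\subseteq\mathcal S_j$ = the $\min(k_j,|\mathcal S_j|)$ agents of $\mathcal S_j$ closest to $y_j$ (ties by priority); utility $u_i=1-|x_i-y_j|$ if $i\in T_j$, else $0$. $NE(\vec x,\vec y)$ = set of pure Nash equilibria; $SW_\gamma=\sum_iu_i$. A mechanism $M:[0,1]^n\to\mathbb R^m$ is absolutely truthful if for every $i,\vec x,x_i'\in[0,1],\vec s_{-i}$: $\max_{s_i}u_i(\vec x,M(\vec x);s_i,\vec s_{-i})\ge\max_{s_i'}u_i(\vec x,M(x_i',\vec x_{-i});s_i',\vec s_{-i})$; it is Equilibrium Stable (ES) if it is absolutely truthful and for every $\vec x$ all $\gamma\in NE(\vec x,M(\vec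 x))$ give the same $SW_\gamma(\vec x,M(\vec x))$. Percentile mechanism $\mathcal{PM}_{\vec v}$: sort reports $x_1\le\dots\le x_n$, set $y_j=x_{\lfloor(n-1)v_j\rfloor+1}$. *)

theory Defs
  imports Complex_Main
begin

text \<open>Agents are indexed 0..<n, facilities 0..<m (0-indexed).
  Positions x :: nat => real, facility locations y :: nat => real,
  strategy profiles s :: nat => nat (agent i chooses facility s i).
  The fixed priority order is given by a ranking pr :: nat => nat
  (injective on the agents); smaller pr value = higher priority.\<close>

definition beats :: "(nat \<Rightarrow> nat) \<Rightarrow> (nat \<Rightarrow> real) \<Rightarrow> real \<Rightarrow> nat \<Rightarrow> nat \<Rightarrow> bool" where
  "beats pr x yj a b \<longleftrightarrow>
     \<bar>x a - yj\<bar> < \<bar>x b - yj\<bar> \<or> (\<bar>x a - yj\<bar> = \<bar>x b - yj\<bar> \<and> pr a < pr b)"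

text \<open>Agent i is in T_{s i}: fewer than k agents choosing the same facility
  are ahead of i (closer, ties broken by priority).\<close>
definition served :: "nat \<Rightarrow> nat \<Rightarrow> (nat \<Rightarrow> nat) \<Rightarrow> (nat \<Rightarrow> real) \<Rightarrow> (nat \<Rightarrow> real)
    \<Rightarrow> (nat \<Rightarrow> nat) \<Rightarrow> nat \<Rightarrow> bool" where
  "served n k pr x y s i \<longleftrightarrow>
     card {a \<in> {0..<n}. a \<noteq> i \<and> s a = s i \<and> beats pr x (y (s i)) a i} < k"

definition util :: "nat \<Rightarrow> nat \<Rightarrow> (nat \<Rightarrow> nat) \<Rightarrow> (nat \<Rightarrow> real) \<Rightarrow> (nat \<Rightarrow> real)
    \<Rightarrow> (nat \<Rightarrow> nat) \<Rightarrow> nat \<Rightarrow> real" where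
  "util n k pr x y s i = (if served n k pr x y s i then 1 - \<bar>x i - y (s i)\<bar> else 0)"

definition profile :: "nat \<Rightarrow> nat \<Rightarrow> (nat \<Rightarrow> nat) \<Rightarrow> bool" where
  "profile m n s \<longleftrightarrow> (\<forall>i<n. s i < m)"

definition is_NE :: "nat \<Rightarrow> nat \<Rightarrow> nat \<Rightarrow> (nat \<Rightarrow> nat) \<Rightarrow> (nat \<Rightarrow> real) \<Rightarrow> (nat \<Rightarrow> real)
    \<Rightarrow> (nat \<Rightarrow> nat) \<Rightarrow> bool" where
  "is_NE m n k pr x y s \<longleftrightarrow> profile m n s \<and>
     (\<forall>i<n. \<forall>j<m. util n k pr x y (s(i := j)) i \<le> util n k pr x y s i)"

definition SW :: "nat \<Rightarrow> nat \<Rightarrow> (nat \<Rightarrow> nat) \<Rightarrow> (nat \<Rightarrow> real) \<Rightarrow> (nat \<Rightarrow> real)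
    \<Rightarrow> (nat \<Rightarrow> nat) \<Rightarrow> real" where
  "SW n k pr x y s = (\<Sum>i<n. util n k pr x y s i)"

definition best_util :: "nat \<Rightarrow> nat \<Rightarrow> nat \<Rightarrow> (nat \<Rightarrow> nat) \<Rightarrow> (nat \<Rightarrow> real) \<Rightarrow> (nat \<Rightarrow> real)
    \<Rightarrow> (nat \<Rightarrow> nat) \<Rightarrow> nat \<Rightarrow> real" where
  "best_util m n k pr x y s i = Max ((\<lambda>j. util n k pr x y (s(i := j)) i) ` {0..<m})"

definition valid_pos :: "nat \<Rightarrow> (nat \<Rightarrow> real) \<Rightarrow> bool" where
  "valid_pos n x \<longleftrightarrow> (\<forall>i<n. x i \<in> {0..1})"

definition abs_truthful :: "nat \<Rightarrow> nat \<Rightarrow> nat \<Rightarrow> (nat \<Rightarrow> nat)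
    \<Rightarrow> ((nat \<Rightarrow> real) \<Rightarrow> (nat \<Rightarrow> real)) \<Rightarrow> bool" where
  "abs_truthful m n k pr M \<longleftrightarrow>
     (\<forall>i<n. \<forall>x x'. valid_pos n x \<longrightarrow> x' \<in> {0..1} \<longrightarrow>
        (\<forall>s. profile m n s \<longrightarrow>
           best_util m n k pr x (M x) s i \<ge> best_util m n k pr x (M (x(i := x'))) s i))"

definition equilibrium_stable :: "nat \<Rightarrow> nat \<Rightarrow> nat \<Rightarrow> (nat \<Rightarrow> nat)
    \<Rightarrow> ((nat \<Rightarrow> real) \<Rightarrow> (nat \<Rightarrow> real)) \<Rightarrow> bool" where
  "equilibrium_stable m n k pr M \<longleftrightarrow> abs_truthful m n k pr M \<and>
     (\<forall>x. valid_pos n x \<longrightarrow> (\<forall>g g'. is_NE m n k pr x (M x) g \<longrightarrow> is_NE m n k pr x (M x) g'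
        \<longrightarrow> SW n k pr x (M x) g = SW n k pr x (M x) g'))"

definition PM :: "nat \<Rightarrow> (nat \<Rightarrow> real) \<Rightarrow> (nat \<Rightarrow> real) \<Rightarrow> (nat \<Rightarrow> real)" where
  "PM n v x = (\<lambda>j. sort (map x [0..<n]) ! nat \<lfloor>v j * real (n - 1)\<rfloor>)"

end

theory Submission
  imports Defs
begin

lemma beats_irrefl: "\<not> beats pr x yj a a"
  by (simp add: beats_def)

lemma beats_asym: "beats pr x yj a b \<Longrightarrow> \<not> beats pr x yj b a"
  by (auto simp: beats_def)

lemma beats_trans: "beats pr x yj a b \<Longrightarrow> beats pr x yj b c \<Longrightarrow> beats pr x yj a c"
  by (auto simp: beats_def)

lemma beats_total:
  assumes "inj_on pr {0..<n}" "a < n" "b < n" "a \<noteq> b"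
  shows "beats pr x yj a b \<or> beats pr x yj b a"
proof -
  have "pr a \<noteq> pr b" using assms by (auto dest: inj_onD)
  then show ?thesis by (auto simp: beats_def)
qed

lemma beats_closer: "\<bar>x a - yj\<bar> < \<bar>x b - yj\<bar> \<Longrightarrow> beats pr x yj a b"
  by (simp add: beats_def)

lemma beats_dist: "beats pr x yj a b \<Longrightarrow> \<bar>x a - yj\<bar> \<le> \<bar>x b - yj\<bar>"
  by (auto simp: beats_def)

lemma rank_inj:
  fixes R :: "'a \<Rightarrow> 'a \<Rightarrow> bool"
  assumes fin: "finite C"
    and irr: "\<And>a. a \<in> C \<Longrightarrow> \<not> R a a"
    and tr: "\<And>a b c. a \<in> C \<Longrightarrow> b \<in> C \<Longrightarrow> c \<in> C \<Longrightarrow> R a b \<Longrightarrow> R b c \<Longrightarrow> R a c"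
    and tot: "\<And>a b. a \<in> C \<Longrightarrow> b \<in> C \<Longrightarrow> a \<noteq> b \<Longrightarrow> R a b \<or> R b a"
  shows "inj_on (\<lambda>c. card {a \<in> C. R a c}) C"
proof (rule inj_onI, rule ccontr)
  fix c d assume c: "c \<in> C" and d: "d \<in> C" and eq: "card {a \<in> C. R a c} = card {a \<in> C. R a d}"
    and ne: "c \<noteq> d"
  have lt: "card {a \<in> C. R a u} < card {a \<in> C. R a w}" if u: "u \<in> C" and w: "w \<in> C" and "R u w" for u w
  proof (rule psubset_card_mono)
    show "finite {a \<in> C. R a w}" using fin by simp
    show "{a \<in> C. R a u} \<subset> {a \<in> C. R a w}"
    proof
      show "{a \<in> C. R a u} \<subseteq> {a \<in> C. R a w}" using tr u w \<open>R u w\<close> by blast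
      show "{a \<in> C. R a u} \<noteq> {a \<in> C. R a w}" using u \<open>R u w\<close> irr by blast
    qed
  qed
  from tot[OF c d ne] show False
    using lt[OF c d] lt[OF d c] eq by auto
qed

lemma rank_image:
  fixes R :: "'a \<Rightarrow> 'a \<Rightarrow> bool"
  assumes fin: "finite C"
    and irr: "\<And>a. a \<in> C \<Longrightarrow> \<not> R a a"
    and tr: "\<And>a b c. a \<in> C \<Longrightarrow> b \<in> C \<Longrightarrow> c \<in> C \<Longrightarrow> R a b \<Longrightarrow> R b c \<Longrightarrow> R a c"
    and tot: "\<And>a b. a \<in> C \<Longrightarrow> b \<in> C \<Longrightarrow> a \<noteq> b \<Longrightarrow> R a b \<or> R b a"
  shows "(\<lambda>c. card {a \<in> C. R a c}) ` C = {..<card C}"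
proof -
  let ?r = "\<lambda>c. card {a \<in> C. R a c}"
  have inj: "inj_on ?r C" by (rule rank_inj[OF assms])
  have sub: "?r ` C \<subseteq> {..<card C}"
  proof
    fix y assume "y \<in> ?r ` C"
    then obtain c where c: "c \<in> C" "y = ?r c" by auto
    have "{a \<in> C. R a c} \<subset> C" using c irr by blast
    then have "?r c < card C" using fin by (simp add: psubset_card_mono)
    then show "y \<in> {..<card C}" using c by simp
  qed
  have "card (?r ` C) = card C" using inj by (simp add: card_image)
  then show ?thesis using sub by (simp add: card_subset_eq)
qed

lemma rank_count:
  fixes R :: "'a \<Rightarrow> 'a \<Rightarrow> bool"
  assumes fin: "finite C"
    and irr: "\<And>a. a \<in> C \<Longrightarrow> \<not> R a a"
    and tr: "\<And>a b c. a \<in> C \<Longrightarrow> b \<in> C \<Longrightarrow> c \<in> C \<Longrightarrow> R a b \<Longrightarrow> R b c \<Longrightarrow> R a c"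
    and tot: "\<And>a b. a \<in> C \<Longrightarrow> b \<in> C \<Longrightarrow> a \<noteq> b \<Longrightarrow> R a b \<or> R b a"
  shows "card {c \<in> C. card {a \<in> C. R a c} < k} = min k (card C)"
proof -
  let ?r = "\<lambda>c. card {a \<in> C. R a c}"
  have inj: "inj_on ?r C" by (rule rank_inj[OF assms])
  have im: "?r ` C = {..<card C}" by (rule rank_image[OF assms])
  have "?r ` {c \<in> C. ?r c < k} = {..<card C} \<inter> {..<k}"
    using im by auto
  moreover have "card (?r ` {c \<in> C. ?r c < k}) = card {c \<in> C. ?r c < k}"
    by (rule card_image) (rule inj_on_subset[OF inj], auto)
  moreover have "{..<card C} \<inter> {..<k} = {..<min k (card C)}" by auto
  ultimately show ?thesis by simp
qed

lemma sorted_nth_pred: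
  fixes L :: "real list"
  assumes "sorted L" "p < length L" "\<And>z z'. P z \<Longrightarrow> z' \<le> z \<Longrightarrow> P z'"
  shows "P (L ! p) \<longleftrightarrow> p < length (filter P L)"
  using assms
proof (induction L arbitrary: p)
  case Nil then show ?case by simp
next
  case (Cons a L)
  show ?case
  proof (cases "P a")
    case True
    show ?thesis
    proof (cases p)
      case 0 then show ?thesis using True by simp
    next
      case (Suc q)
      then show ?thesis using Cons True by simp
    qed
  next
    case False
    have "\<forall>z\<in>set L. \<not> P z" using Cons.prems(1) False Cons.prems(3) by auto
    then have "filter P L = []" by (simp add: filter_empty_conv)
    moreover have "\<not> P ((a # L) ! p)"
    proof (cases p)
      case 0 then show ?thesis using False by simp
    next
      case (Suc q)
      then have "q < length L" using Cons.prems(2) by simp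
      then have "L ! q \<in> set L" by simp
      then show ?thesis using \<open>\<forall>z\<in>set L. \<not> P z\<close> Suc by simp
    qed
    ultimately show ?thesis using False by simp
  qed
qed

lemma length_filter_sort: "length (filter P (sort xs)) = length (filter P xs)"
  by (simp add: filter_sort)

lemma length_filter_map_upt:
  "length (filter P (map x [0..<n])) = card {a. a < n \<and> P (x a)}"
  unfolding length_filter_conv_card by (rule arg_cong[where f=card]) auto

lemma sort_nth_lt:
  fixes x :: "nat \<Rightarrow> real"
  assumes "p < n"
  shows "sort (map x [0..<n]) ! p < t \<longleftrightarrow> p < card {a. a < n \<and> x a < t}"
proof -
  have "sort (map x [0..<n]) ! p < t \<longleftrightarrow> p < length (filter (\<lambda>z. z < t) (sort (map x [0..<n])))"
    by (rule sorted_nth_pred) (use assms in auto)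
  also have "\<dots> \<longleftrightarrow> p < card {a. a < n \<and> x a < t}"
    by (simp only: length_filter_sort length_filter_map_upt)
  finally show ?thesis .
qed

lemma sort_nth_le:
  fixes x :: "nat \<Rightarrow> real"
  assumes "p < n"
  shows "sort (map x [0..<n]) ! p \<le> t \<longleftrightarrow> p < card {a. a < n \<and> x a \<le> t}"
proof -
  have "sort (map x [0..<n]) ! p \<le> t \<longleftrightarrow> p < length (filter (\<lambda>z. z \<le> t) (sort (map x [0..<n])))"
    by (rule sorted_nth_pred) (use assms in auto)
  also have "\<dots> \<longleftrightarrow> p < card {a. a < n \<and> x a \<le> t}"
    by (simp only: length_filter_sort length_filter_map_upt)
  finally show ?thesis .
qed

lemma sort_nth_in:
  fixes x :: "nat \<Rightarrow> real"
  assumes "p < n"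
  shows "\<exists>a<n. sort (map x [0..<n]) ! p = x a"
proof -
  have "sort (map x [0..<n]) ! p \<in> set (sort (map x [0..<n]))" by (rule nth_mem) (use assms in simp)
  then have "sort (map x [0..<n]) ! p \<in> x ` {0..<n}" by simp
  then show ?thesis by auto
qed

lemma cnt_lt_le: "card {a. a < n \<and> (x a :: real) < sort (map x [0..<n]) ! p} \<le> p" if "p < n"
  using sort_nth_lt[OF that, of x "sort (map x [0..<n]) ! p"] by simp

lemma cnt_le_gt: "p < card {a. a < n \<and> (x a :: real) \<le> sort (map x [0..<n]) ! p}" if "p < n"
  using sort_nth_le[OF that, of x "sort (map x [0..<n]) ! p"] by simp

definition Ch :: "nat \<Rightarrow> (nat \<Rightarrow> nat) \<Rightarrow> nat \<Rightarrow> nat set" where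
  "Ch n s j = {a. a < n \<and> s a = j}"

definition Sv :: "nat \<Rightarrow> nat \<Rightarrow> (nat \<Rightarrow> nat) \<Rightarrow> (nat \<Rightarrow> real) \<Rightarrow> (nat \<Rightarrow> real)
    \<Rightarrow> (nat \<Rightarrow> nat) \<Rightarrow> nat \<Rightarrow> nat set" where
  "Sv n k pr x y s j = {a. a < n \<and> s a = j \<and> served n k pr x y s a}"

lemma finite_Ch[simp]: "finite (Ch n s j)" by (simp add: Ch_def)
lemma finite_Sv[simp]: "finite (Sv n k pr x y s j)" by (simp add: Sv_def)

lemma served_alt:
  "served n k pr x y s i \<longleftrightarrow> card {a \<in> Ch n s (s i). beats pr x (y (s i)) a i} < k"
proof -
  have "{a \<in> {0..<n}. a \<noteq> i \<and> s a = s i \<and> beats pr x (y (s i)) a i} = {a \<in> Ch n s (s i). beats pr x (y (s i)) a i}"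
    by (auto simp: Ch_def beats_irrefl)
  then show ?thesis by (simp add: served_def)
qed

lemma Sv_alt: "Sv n k pr x y s j = {c \<in> Ch n s j. card {a \<in> Ch n s j. beats pr x (y j) a c} < k}"
  by (auto simp: Sv_def Ch_def served_alt)

lemma card_Sv:
  assumes "inj_on pr {0..<n}"
  shows "card (Sv n k pr x y s j) = min k (card (Ch n s j))"
  unfolding Sv_alt
proof (rule rank_count)
  show "finite (Ch n s j)" by simp
  show "\<And>a. \<not> beats pr x (y j) a a" by (rule beats_irrefl)
  show "\<And>a b c. beats pr x (y j) a b \<Longrightarrow> beats pr x (y j) b c \<Longrightarrow> beats pr x (y j) a c"
    by (rule beats_trans)
  show "\<And>a b. a \<in> Ch n s j \<Longrightarrow> b \<in> Ch n s j \<Longrightarrow> a \<noteq> b \<Longrightarrow> beats pr x (y j) a b \<or> beats pr x (y j) b a"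
    using beats_total[OF assms] by (auto simp: Ch_def)
qed

lemma card_Sv_le: "inj_on pr {0..<n} \<Longrightarrow> card (Sv n k pr x y s j) \<le> k"
  by (simp add: card_Sv)

lemma Sv_sub_Ch: "Sv n k pr x y s j \<subseteq> Ch n s j"
  by (auto simp: Sv_def Ch_def)

lemma dev_served_iff:
  "served n k pr x y (s(b := j)) b \<longleftrightarrow> card {a. a < n \<and> a \<noteq> b \<and> s a = j \<and> beats pr x (y j) a b} < k"
proof -
  have "{a \<in> {0..<n}. a \<noteq> b \<and> (s(b := j)) a = (s(b := j)) b \<and> beats pr x (y ((s(b := j)) b)) a b}
        = {a. a < n \<and> a \<noteq> b \<and> s a = j \<and> beats pr x (y j) a b}" by auto
  then show ?thesis by (simp add: served_def)
qed

lemma util_dev: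
  "util n k pr x y (s(b := j)) b = (if card {a. a < n \<and> a \<noteq> b \<and> s a = j \<and> beats pr x (y j) a b} < k
      then 1 - \<bar>x b - y j\<bar> else 0)"
  by (simp add: util_def dev_served_iff)

lemma util_le: "\<bar>x i - y (s i)\<bar> \<le> 1 \<Longrightarrow> util n k pr x y s i \<le> 1 - \<bar>x i - y (s i)\<bar>"
  by (simp add: util_def)

lemma util_ge0: "\<bar>x i - y (s i)\<bar> \<le> 1 \<Longrightarrow> 0 \<le> util n k pr x y s i"
  by (simp add: util_def)

lemma util_pos_served: "0 < util n k pr x y s i \<Longrightarrow> served n k pr x y s i"
  by (auto simp: util_def split: if_splits)

lemma util_served: "served n k pr x y s i \<Longrightarrow> util n k pr x y s i = 1 - \<bar>x i - y (s i)\<bar>"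
  by (simp add: util_def)

lemma sort_update_between:
  fixes x :: "nat \<Rightarrow> real"
  assumes p: "p < n" and i: "i < n"
  shows "(x i \<le> sort (map x [0..<n]) ! p \<and> sort (map x [0..<n]) ! p \<le> sort (map (x(i:=x')) [0..<n]) ! p)
       \<or> (sort (map (x(i:=x')) [0..<n]) ! p \<le> sort (map x [0..<n]) ! p \<and> sort (map x [0..<n]) ! p \<le> x i)"
proof -
  define t where "t = sort (map x [0..<n]) ! p"
  define t' where "t' = sort (map (x(i:=x')) [0..<n]) ! p"
  have "(x i \<le> t \<and> t \<le> t') \<or> (t' \<le> t \<and> t \<le> x i)"
  proof (cases "x i < t")
    case True
    have sub: "{a. a < n \<and> (x(i:=x')) a < t} \<subseteq> {a. a < n \<and> x a < t}" using True by auto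
    have "card {a. a < n \<and> (x(i:=x')) a < t} \<le> card {a. a < n \<and> x a < t}"
      by (rule card_mono[OF _ sub]) simp
    also have "\<dots> \<le> p" unfolding t_def by (rule cnt_lt_le[OF p])
    finally have "\<not> t' < t" unfolding t'_def using sort_nth_lt[OF p, of "x(i:=x')" t] by simp
    then show ?thesis using True by simp
  next
    case False
    show ?thesis
    proof (cases "x i = t")
      case True then show ?thesis by auto
    next
      case False2: False
      then have gt: "t < x i" using False by simp
      have sub: "{a. a < n \<and> x a \<le> t} \<subseteq> {a. a < n \<and> (x(i:=x')) a \<le> t}" using gt by auto
      have "p < card {a. a < n \<and> x a \<le> t}" unfolding t_def by (rule cnt_le_gt[OF p])
      also have "\<dots> \<le> card {a. a < n \<and> (x(i:=x')) a \<le> t}"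
        by (rule card_mono[OF _ sub]) simp
      finally have "t' \<le> t" unfolding t'_def using sort_nth_le[OF p, of "x(i:=x')" t] by simp
      then show ?thesis using gt by simp
    qed
  qed
  then show ?thesis unfolding t_def t'_def .
qed

lemma beats_between:
  assumes "\<bar>x i - yj'\<bar> = \<bar>x i - yj\<bar> + \<bar>yj - yj'\<bar>" "beats pr x yj a i"
  shows "beats pr x yj' a i"
proof -
  have tri: "\<bar>x a - yj'\<bar> \<le> \<bar>x a - yj\<bar> + \<bar>yj - yj'\<bar>" by linarith
  show ?thesis using assms tri unfolding beats_def by linarith
qed

lemma util_mono_loc:
  assumes btw: "\<bar>x i - y' (s i)\<bar> = \<bar>x i - y (s i)\<bar> + \<bar>y (s i) - y' (s i)\<bar>"
    and le1: "\<bar>x i - y (s i)\<bar> \<le> 1"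
  shows "util n k pr x y' s i \<le> util n k pr x y s i"
proof (cases "served n k pr x y' s i")
  case True
  have sub: "{a \<in> {0..<n}. a \<noteq> i \<and> s a = s i \<and> beats pr x (y (s i)) a i}
           \<subseteq> {a \<in> {0..<n}. a \<noteq> i \<and> s a = s i \<and> beats pr x (y' (s i)) a i}"
    using beats_between[where x=x and i=i and yj'="y' (s i)" and yj="y (s i)", OF btw] by blast
  have "card {a \<in> {0..<n}. a \<noteq> i \<and> s a = s i \<and> beats pr x (y (s i)) a i}
      \<le> card {a \<in> {0..<n}. a \<noteq> i \<and> s a = s i \<and> beats pr x (y' (s i)) a i}"
    by (rule card_mono[OF _ sub]) simp
  then have "served n k pr x y s i" using True unfolding served_def by linarith
  then show ?thesis using True btw by (simp add: util_def)
next
  case False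
  then show ?thesis using le1 by (simp add: util_def)
qed

lemma pidx_lt:
  assumes "v \<in> {0..1}" "0 < n"
  shows "nat \<lfloor>v * real (n - 1)\<rfloor> < n"
proof -
  have "v * real (n - 1) \<le> real (n - 1)" using assms by (simp add: mult_left_le_one_le)
  then have "\<lfloor>v * real (n - 1)\<rfloor> \<le> int (n - 1)" by linarith
  then show ?thesis using assms by linarith
qed

lemma PM_nth: "PM n v x j = sort (map x [0..<n]) ! nat \<lfloor>v j * real (n - 1)\<rfloor>"
  by (simp add: PM_def)

lemma PM_in01:
  assumes "valid_pos n x" "v j \<in> {0..1}" "0 < n"
  shows "PM n v x j \<in> {0..1}"
proof -
  obtain a where "a < n" "PM n v x j = x a"
    using sort_nth_in[OF pidx_lt[OF assms(2,3)], of x] by (auto simp: PM_nth)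
  then show ?thesis using assms(1) by (auto simp: valid_pos_def)
qed

lemma Max_img_mono:
  fixes f g :: "nat \<Rightarrow> real"
  assumes "finite A" "A \<noteq> {}" "\<And>j. j \<in> A \<Longrightarrow> g j \<le> f j"
  shows "Max (g ` A) \<le> Max (f ` A)"
proof -
  have "Max (g ` A) \<in> g ` A" using assms by (intro Max_in) auto
  then obtain j where j: "j \<in> A" "Max (g ` A) = g j" by auto
  have "f j \<le> Max (f ` A)" using assms j by (intro Max_ge) auto
  then show ?thesis using j assms(3) by fastforce
qed

lemma PM_truthful:
  assumes v: "\<forall>j<m. v j \<in> {0..1}" and n: "0 < n" and m: "0 < m"
  shows "abs_truthful m n k pr (PM n v)"
  unfolding abs_truthful_def
proof (intro allI impI)
  fix i :: nat and x :: "nat \<Rightarrow> real" and x' :: real and s :: "nat \<Rightarrow> nat"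
  assume i: "i < n" and vx: "valid_pos n x" and x': "x' \<in> {0..1}" and prof: "profile m n s"
  let ?y = "PM n v x" and ?y' = "PM n v (x(i := x'))"
  have key: "util n k pr x ?y' (s(i := j)) i \<le> util n k pr x ?y (s(i := j)) i" if j: "j < m" for j
  proof (rule util_mono_loc)
    have p: "nat \<lfloor>v j * real (n - 1)\<rfloor> < n" using pidx_lt[OF _ n] v j by auto
    from sort_update_between[OF p i, where x=x and x'=x']
    show "\<bar>x i - ?y' ((s(i := j)) i)\<bar> = \<bar>x i - ?y ((s(i := j)) i)\<bar> + \<bar>?y ((s(i := j)) i) - ?y' ((s(i := j)) i)\<bar>"
      by (auto simp: PM_nth)
    have "?y j \<in> {0..1}" using PM_in01[OF vx _ n] v j by auto
    moreover have "x i \<in> {0..1}" using vx i by (auto simp: valid_pos_def)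
    ultimately show "\<bar>x i - ?y ((s(i := j)) i)\<bar> \<le> 1" by auto
  qed
  show "best_util m n k pr x (PM n v (x(i := x'))) s i \<le> best_util m n k pr x (PM n v x) s i"
    unfolding best_util_def
    by (rule Max_img_mono) (use m key in auto)
qed

lemma arith_contra: fixes F k :: nat assumes "2 \<le> F" "1 \<le> k" shows "F * k < (F - 1) * (2 * k - 1) + 2"
proof -
  obtain f q where "F = f + 2" "k = q + 1" using assms by (metis add.commute le_Suc_ex one_add_one)
  then show ?thesis by (simp add: algebra_simps)
qed
lemma gap_gen:
  fixes p :: "nat \<Rightarrow> nat"
  assumes "\<forall>j. j + 1 < m \<longrightarrow> p j + g \<le> p (j + 1)"
  shows "j \<le> l \<Longrightarrow> l < m \<Longrightarrow> p j + (l - j) * g \<le> p l"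
proof (induction l)
  case 0 then show ?case by simp
next
  case (Suc l)
  show ?case
  proof (cases "j = Suc l")
    case True then show ?thesis by simp
  next
    case False
    then have "j \<le> l" using Suc.prems by simp
    then have ih: "p j + (l - j) * g \<le> p l" using Suc by simp
    have "p l + g \<le> p (Suc l)" using assms Suc.prems by auto
    moreover have "(Suc l - j) * g = (l - j) * g + g" using \<open>j \<le> l\<close> by (simp add: Suc_diff_le)
    ultimately show ?thesis using ih by simp
  qed
qed

definition viol :: "nat \<Rightarrow> nat \<Rightarrow> nat \<Rightarrow> (nat \<Rightarrow> nat) \<Rightarrow> (nat \<Rightarrow> real) \<Rightarrow> (nat \<Rightarrow> real)
   \<Rightarrow> (nat \<Rightarrow> nat) \<Rightarrow> nat \<Rightarrow> nat \<Rightarrow> bool" where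
  "viol m n k pr x y s b j \<longleftrightarrow> b < n \<and> j < m \<and> b \<notin> Sv n k pr x y s j \<and> \<bar>x b - y j\<bar> < 1 \<and>
     (card (Sv n k pr x y s j) < k \<or> (\<exists>w \<in> Sv n k pr x y s j. \<bar>x b - y j\<bar> < \<bar>x w - y j\<bar>))"

lemma viol_dev_served:
  assumes inj: "inj_on pr {0..<n}" and v: "viol m n k pr x y s b j"
  shows "served n k pr x y (s(b := j)) b"
proof -
  let ?T = "{a. a < n \<and> a \<noteq> b \<and> s a = j \<and> beats pr x (y j) a b}"
  have "card ?T < k"
  proof (cases "card (Sv n k pr x y s j) < k")
    case True
    then have "card (Ch n s j) < k" using card_Sv[OF inj, of k x y s j] by simp
    moreover have "card ?T \<le> card (Ch n s j)" by (rule card_mono) (auto simp: Ch_def)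
    ultimately show ?thesis by simp
  next
    case False
    then obtain w where w: "w \<in> Sv n k pr x y s j" "\<bar>x b - y j\<bar> < \<bar>x w - y j\<bar>"
      using v by (auto simp: viol_def)
    have ws: "s w = j" "served n k pr x y s w" using w(1) by (auto simp: Sv_def)
    have "?T \<subseteq> {a \<in> Ch n s (s w). beats pr x (y (s w)) a w}"
    proof
      fix a assume a: "a \<in> ?T"
      then have "beats pr x (y j) a b" by simp
      moreover have "beats pr x (y j) b w" using w(2) by (rule beats_closer)
      ultimately have "beats pr x (y j) a w" by (rule beats_trans)
      then show "a \<in> {a \<in> Ch n s (s w). beats pr x (y (s w)) a w}" using a ws by (auto simp: Ch_def)
    qed
    then have "card ?T \<le> card {a \<in> Ch n s (s w). beats pr x (y (s w)) a w}"
      by (intro card_mono) (auto simp: Ch_def)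
    also have "\<dots> < k" using ws(2) by (simp add: served_alt)
    finally show ?thesis .
  qed
  then show ?thesis by (simp add: dev_served_iff)
qed

lemma viol_util:
  assumes inj: "inj_on pr {0..<n}" and ne: "is_NE m n k pr x y s" and v: "viol m n k pr x y s b j"
  shows "1 - \<bar>x b - y j\<bar> \<le> util n k pr x y s b"
proof -
  have "util n k pr x y (s(b := j)) b = 1 - \<bar>x b - y j\<bar>"
    using viol_dev_served[OF inj v] by (simp add: util_def)
  moreover have "util n k pr x y (s(b := j)) b \<le> util n k pr x y s b"
    using ne v by (auto simp: is_NE_def viol_def)
  ultimately show ?thesis by simp
qed

lemma viol_served:
  assumes inj: "inj_on pr {0..<n}" and ne: "is_NE m n k pr x y s" and v: "viol m n k pr x y s b j"
  shows "b \<in> Sv n k pr x y s (s b)" "\<bar>x b - y (s b)\<bar> \<le> \<bar>x b - y j\<bar>" "s b \<noteq> j" "s b < m"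
proof -
  have u: "1 - \<bar>x b - y j\<bar> \<le> util n k pr x y s b" by (rule viol_util[OF assms])
  have "\<bar>x b - y j\<bar> < 1" using v by (simp add: viol_def)
  then have "0 < util n k pr x y s b" using u by simp
  then have sv: "served n k pr x y s b" by (rule util_pos_served)
  show "b \<in> Sv n k pr x y s (s b)" using sv v by (simp add: Sv_def viol_def)
  show "\<bar>x b - y (s b)\<bar> \<le> \<bar>x b - y j\<bar>" using u sv by (simp add: util_def)
  show "s b \<noteq> j" using sv v by (auto simp: Sv_def viol_def)
  show "s b < m" using ne v by (auto simp: is_NE_def profile_def viol_def)
qed

lemma no_viol:
  assumes inj: "inj_on pr {0..<n}" and k1: "1 \<le> k"
    and ne: "is_NE m n k pr x y s"
    and py: "\<forall>j<m. p j < n \<and> y j = sort (map x [0..<n]) ! p j"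
    and gap: "\<forall>j l. j \<le> l \<longrightarrow> l < m \<longrightarrow> p j + (l - j) * (2 * k - 1) \<le> p l"
  shows "\<not> viol m n k pr x y s b0 j0"
proof
  assume v0: "viol m n k pr x y s b0 j0"
  define S where "S = Sv n k pr x y s"
  define V where "V = {(b, j). viol m n k pr x y s b j}"
  have Vsub: "V \<subseteq> {..<n} \<times> {..<m}" by (auto simp: V_def viol_def)
  have finV: "finite V" by (rule finite_subset[OF Vsub]) simp
  have Vne: "V \<noteq> {}" using v0 by (auto simp: V_def)
  define \<delta> where "\<delta> = Min ((\<lambda>(b, j). \<bar>x b - y j\<bar>) ` V)"
  have "\<delta> \<in> (\<lambda>(b, j). \<bar>x b - y j\<bar>) ` V" unfolding \<delta>_def using finV Vne by (intro Min_in) auto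
  then obtain c j where cjV: "(c, j) \<in> V" and dcj: "\<bar>x c - y j\<bar> = \<delta>" by auto
  have vj: "viol m n k pr x y s c j" using cjV by (simp add: V_def)
  have minv: "\<delta> \<le> \<bar>x b - y l\<bar>" if "viol m n k pr x y s b l" for b l
  proof -
    have "(b, l) \<in> V" using that by (simp add: V_def)
    then show ?thesis unfolding \<delta>_def using finV by (intro Min_le) force+
  qed
  have cn: "c < n" and jm: "j < m" and cnS: "c \<notin> S j" using vj by (auto simp: viol_def S_def)
  have dlt1: "\<delta> < 1" using vj dcj by (simp add: viol_def)
  have cond_j: "card (S j) < k \<or> (\<exists>w\<in>S j. \<delta> < \<bar>x w - y j\<bar>)"
    using vj dcj by (simp add: viol_def S_def)
  define z where "z = x c"
  define E where "E = {a. a < n \<and> x a = z}"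
  define r where "r l = \<bar>z - y l\<bar>" for l
  define cl where "cl l = {a. a < n \<and> \<bar>x a - y l\<bar> < r l}" for l
  define \<Phi> where "\<Phi> = {l. l < m \<and> E \<inter> S l \<noteq> {}}"
  define \<Phi>' where "\<Phi>' = insert j \<Phi>"
  define A where "A = card {a. a < n \<and> x a < z}"
  define B where "B = card {a. a < n \<and> x a \<le> z}"
  define drk where "drk l = (if p l < A then A - p l else if B \<le> p l then p l + 1 - B else 0)" for l
  have rj: "r j = \<delta>" using dcj by (simp add: r_def z_def abs_minus_commute)
  have dE: "\<bar>x a - y l\<bar> = r l" if "a \<in> E" for a l using that by (simp add: E_def r_def abs_minus_commute)
  have cE: "c \<in> E" using cn by (simp add: E_def z_def)
  have Sl: "s a = l" "a < n" if "a \<in> S l" for a l using that by (auto simp: S_def Sv_def)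
  have E_served: "a \<in> S (s a) \<and> s a < m \<and> r (s a) \<le> \<delta>" if aE: "a \<in> E" for a
  proof (cases "a \<in> S j")
    case True
    then show ?thesis using Sl[OF True] rj jm by simp
  next
    case False
    have va: "viol m n k pr x y s a j"
      using False aE cond_j dE[OF aE, of j] rj dlt1 jm unfolding viol_def S_def E_def by auto
    from viol_served[OF inj ne va] dE[OF aE] rj show ?thesis by (simp add: S_def)
  qed
  have c_other: "s c \<noteq> j" "s c \<in> \<Phi>"
  proof -
    show "s c \<noteq> j" using viol_served(3)[OF inj ne vj] .
    show "s c \<in> \<Phi>" using E_served[OF cE] cE by (auto simp: \<Phi>_def)
  qed
  have Phi'_sub: "\<Phi>' \<subseteq> {..<m}" using jm by (auto simp: \<Phi>'_def \<Phi>_def)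
  have finPhi': "finite \<Phi>'" by (rule finite_subset[OF Phi'_sub]) simp
  have r_le: "r l \<le> \<delta>" if lP0: "l \<in> \<Phi>'" for l
  proof (cases "l = j")
    case True then show ?thesis using rj by simp
  next
    case False
    then obtain a where "a \<in> E" "a \<in> S l" using lP0 by (auto simp: \<Phi>'_def \<Phi>_def)
    then show ?thesis using E_served Sl by fastforce
  qed
  have cl_sub: "cl l \<subseteq> S l" if lP: "l \<in> \<Phi>'" for l
  proof
    fix a assume acl: "a \<in> cl l"
    show "a \<in> S l"
    proof (rule ccontr)
      assume naS: "a \<notin> S l"
      have an: "a < n" and dal: "\<bar>x a - y l\<bar> < r l" using acl by (auto simp: cl_def)
      have lm: "l < m" using lP Phi'_sub by auto
      have cond: "card (S l) < k \<or> (\<exists>w\<in>S l. \<bar>x a - y l\<bar> < \<bar>x w - y l\<bar>)"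
      proof (cases "l = j")
        case True
        then show ?thesis using cond_j dal rj by force
      next
        case False
        then obtain w where "w \<in> E" "w \<in> S l" using lP by (auto simp: \<Phi>'_def \<Phi>_def)
        then show ?thesis using dE dal by force
      qed
      have "viol m n k pr x y s a l"
        using an lm naS dal r_le[OF lP] dlt1 cond unfolding viol_def S_def by auto
      then have "\<delta> \<le> \<bar>x a - y l\<bar>" by (rule minv)
      then show False using dal r_le[OF lP] by simp
    qed
  qed
  have E_cl_disj: "(E \<inter> S l) \<inter> cl l = {}" for l using dE by (auto simp: cl_def)
  have fin_cl: "finite (cl l)" for l by (simp add: cl_def)
  have finE: "finite E" by (simp add: E_def)
  have bound_l: "card (E \<inter> S l) + card (cl l) \<le> k" if "l \<in> \<Phi>'" for l
  proof -
    have "card (E \<inter> S l) + card (cl l) = card ((E \<inter> S l) \<union> cl l)"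
      using E_cl_disj[of l] finE fin_cl by (simp add: card_Un_disjoint)
    also have "\<dots> \<le> card (S l)"
      using cl_sub[OF that] by (intro card_mono) (auto simp: S_def)
    also have "\<dots> \<le> k" unfolding S_def by (rule card_Sv_le[OF inj])
    finally show ?thesis .
  qed
  have bound_j: "card (E \<inter> S j) + card (cl j) + 1 \<le> k"
  proof -
    have jP: "j \<in> \<Phi>'" by (simp add: \<Phi>'_def)
    have eq: "card (E \<inter> S j) + card (cl j) = card ((E \<inter> S j) \<union> cl j)"
      using E_cl_disj[of j] finE fin_cl by (simp add: card_Un_disjoint)
    have sub: "(E \<inter> S j) \<union> cl j \<subseteq> S j" using cl_sub[OF jP] by auto
    show ?thesis
    proof (cases "card (S j) < k")
      case True
      have "card ((E \<inter> S j) \<union> cl j) \<le> card (S j)" using sub by (intro card_mono) (auto simp: S_def)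
      then show ?thesis using eq True by simp
    next
      case False
      then obtain w where w: "w \<in> S j" "\<delta> < \<bar>x w - y j\<bar>" using cond_j by auto
      have wn: "w \<notin> (E \<inter> S j) \<union> cl j" using w dE rj r_le[OF jP] by (auto simp: cl_def)
      have "card (insert w ((E \<inter> S j) \<union> cl j)) \<le> card (S j)"
        using sub w by (intro card_mono) (auto simp: S_def)
      moreover have "card (insert w ((E \<inter> S j) \<union> cl j)) = card ((E \<inter> S j) \<union> cl j) + 1"
        using wn finE fin_cl by simp
      moreover have "card (S j) \<le> k" unfolding S_def by (rule card_Sv_le[OF inj])
      ultimately show ?thesis using eq by simp
    qed
  qed
  have drk_le: "drk l \<le> card (cl l)" if lm: "l < m" for l
  proof -
    have pl: "p l < n" and yl: "y l = sort (map x [0..<n]) ! p l" using py lm by auto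
    show ?thesis
    proof (cases "p l < A")
      case True
      have ylz: "y l < z" using True sort_nth_lt[OF pl, of x z] yl by (simp add: A_def)
      define W where "W = {a. a < n \<and> y l \<le> x a \<and> x a < z}"
      have "{a. a < n \<and> x a < z} = {a. a < n \<and> x a < y l} \<union> W" using ylz by (auto simp: W_def)
      moreover have "{a. a < n \<and> x a < y l} \<inter> W = {}" by (auto simp: W_def)
      ultimately have "A = card {a. a < n \<and> x a < y l} + card W"
        unfolding A_def by (simp add: card_Un_disjoint W_def)
      moreover have "card {a. a < n \<and> x a < y l} \<le> p l" using cnt_lt_le[OF pl, of x] yl by simp
      moreover have "W \<subseteq> cl l" by (auto simp: W_def cl_def r_def)
      then have "card W \<le> card (cl l)" by (intro card_mono) (simp add: cl_def)
      ultimately show ?thesis using True by (simp add: drk_def)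
    next
      case False
      show ?thesis
      proof (cases "B \<le> p l")
        case True
        have ylz: "z < y l" using True sort_nth_le[OF pl, of x z] yl by (simp add: B_def)
        define W where "W = {a. a < n \<and> z < x a \<and> x a \<le> y l}"
        have "{a. a < n \<and> x a \<le> y l} = {a. a < n \<and> x a \<le> z} \<union> W" using ylz by (auto simp: W_def)
        moreover have "{a. a < n \<and> x a \<le> z} \<inter> W = {}" by (auto simp: W_def)
        ultimately have "card {a. a < n \<and> x a \<le> y l} = B + card W"
          unfolding B_def by (simp add: card_Un_disjoint W_def)
        moreover have "p l < card {a. a < n \<and> x a \<le> y l}" using cnt_le_gt[OF pl, of x] yl by simp
        moreover have "W \<subseteq> cl l" by (auto simp: W_def cl_def r_def)
        then have "card W \<le> card (cl l)" by (intro card_mono) (simp add: cl_def)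
        ultimately show ?thesis using True False by (simp add: drk_def)
      next
        case False2: False
        then show ?thesis using False by (simp add: drk_def)
      qed
    qed
  qed
  have eAB: "card E + A = B"
  proof -
    have "{a. a < n \<and> x a \<le> z} = {a. a < n \<and> x a < z} \<union> E" by (auto simp: E_def)
    moreover have "{a. a < n \<and> x a < z} \<inter> E = {}" by (auto simp: E_def)
    ultimately show ?thesis unfolding A_def B_def using finE by (simp add: card_Un_disjoint)
  qed
  have e_sum: "card E = (\<Sum>l\<in>\<Phi>'. card (E \<inter> S l))"
  proof -
    have "E = (\<Union>l\<in>\<Phi>'. E \<inter> S l)"
    proof
      show "E \<subseteq> (\<Union>l\<in>\<Phi>'. E \<inter> S l)"
      proof
        fix a assume aE: "a \<in> E"
        have "a \<in> S (s a)" "s a < m" using E_served[OF aE] by auto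
        then show "a \<in> (\<Union>l\<in>\<Phi>'. E \<inter> S l)" using aE by (auto simp: \<Phi>'_def \<Phi>_def)
      qed
    qed auto
    moreover have "card (\<Union>l\<in>\<Phi>'. E \<inter> S l) = (\<Sum>l\<in>\<Phi>'. card (E \<inter> S l))"
    proof (rule card_UN_disjoint[OF finPhi'])
      show "\<forall>i\<in>\<Phi>'. finite (E \<inter> S i)" using finE by auto
      show "\<forall>i\<in>\<Phi>'. \<forall>ja\<in>\<Phi>'. i \<noteq> ja \<longrightarrow> E \<inter> S i \<inter> (E \<inter> S ja) = {}"
        using Sl by blast
    qed
    ultimately show ?thesis by simp
  qed
  define F where "F = card \<Phi>'"
  define lo where "lo = Min \<Phi>'"
  define hi where "hi = Max \<Phi>'"
  have jP: "j \<in> \<Phi>'" and scP: "s c \<in> \<Phi>'" using c_other by (auto simp: \<Phi>'_def)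
  have Pne: "\<Phi>' \<noteq> {}" using jP by auto
  have loP: "lo \<in> \<Phi>'" and hiP: "hi \<in> \<Phi>'" unfolding lo_def hi_def using finPhi' Pne by auto
  have lo_le: "lo \<le> l" and le_hi: "l \<le> hi" if "l \<in> \<Phi>'" for l
    unfolding lo_def hi_def using finPhi' that by auto
  have lohi: "lo \<noteq> hi"
  proof
    assume "lo = hi"
    then have "j = s c" using lo_le[OF jP] le_hi[OF jP] lo_le[OF scP] le_hi[OF scP] by simp
    then show False using c_other by simp
  qed
  have F2: "2 \<le> F"
  proof -
    have "{j, s c} \<subseteq> \<Phi>'" using jP scP by auto
    then have "card {j, s c} \<le> F" unfolding F_def using finPhi' by (intro card_mono)
    then show ?thesis using c_other by simp
  qed
  have Fhl: "F \<le> hi - lo + 1"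
  proof -
    have "\<Phi>' \<subseteq> {lo..hi}" using lo_le le_hi by auto
    then have "F \<le> card {lo..hi}" unfolding F_def by (intro card_mono) auto
    then show ?thesis by simp
  qed
  have hm: "hi < m" using hiP Phi'_sub by auto
  have lohi2: "lo < hi" using lohi lo_le[OF hiP] by simp
  have G1: "p lo + (hi - lo) * (2 * k - 1) \<le> p hi" using gap lohi2 hm by auto
  have G2: "A \<le> p lo + drk lo" by (simp add: drk_def)
  have G3: "p hi + 1 \<le> B + drk hi" using eAB by (auto simp: drk_def)
  have G5: "card E + drk lo + drk hi + 1 \<le> F * k"
  proof -
    have s1: "(\<Sum>l\<in>\<Phi>'. card (E \<inter> S l) + drk l) + 1 \<le> F * k"
    proof -
      have "(\<Sum>l\<in>\<Phi>'. card (E \<inter> S l) + drk l)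
          = (card (E \<inter> S j) + drk j) + (\<Sum>l\<in>\<Phi>' - {j}. card (E \<inter> S l) + drk l)"
        using finPhi' jP by (simp add: sum.remove)
      also have "(\<Sum>l\<in>\<Phi>' - {j}. card (E \<inter> S l) + drk l) \<le> (\<Sum>l\<in>\<Phi>' - {j}. k)"
      proof (rule sum_mono)
        fix l assume "l \<in> \<Phi>' - {j}"
        then have "l \<in> \<Phi>'" by simp
        then show "card (E \<inter> S l) + drk l \<le> k"
          using bound_l drk_le Phi'_sub by force
      qed
      also have "(\<Sum>l\<in>\<Phi>' - {j}. k) = (F - 1) * k"
        using finPhi' jP by (simp add: F_def)
      finally have "(\<Sum>l\<in>\<Phi>'. card (E \<inter> S l) + drk l) \<le> card (E \<inter> S j) + drk j + (F - 1) * k"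
        by simp
      moreover have "card (E \<inter> S j) + drk j + 1 \<le> k" using bound_j drk_le[OF jm] by simp
      moreover have "(F - 1) * k + k = F * k" using F2 by (cases F) auto
      ultimately show ?thesis by linarith
    qed
    have s2: "drk lo + drk hi \<le> (\<Sum>l\<in>\<Phi>'. drk l)"
    proof -
      have "(\<Sum>l\<in>{lo, hi}. drk l) \<le> (\<Sum>l\<in>\<Phi>'. drk l)"
        using loP hiP finPhi' by (intro sum_mono2) auto
      then show ?thesis using lohi by simp
    qed
    have "(\<Sum>l\<in>\<Phi>'. card (E \<inter> S l) + drk l) = card E + (\<Sum>l\<in>\<Phi>'. drk l)"
      by (simp add: sum.distrib e_sum)
    then show ?thesis using s1 s2 by linarith
  qed
  have G6: "(F - 1) * (2 * k - 1) \<le> (hi - lo) * (2 * k - 1)"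
    using Fhl by (intro mult_right_mono) auto
  have "F * k < (F - 1) * (2 * k - 1) + 2" by (rule arith_contra[OF F2 k1])
  then show False using G1 G2 G3 G5 G6 eAB by linarith
qed

lemma opt_sum:
  fixes f :: "nat \<Rightarrow> real"
  assumes finS: "finite S" and finS': "finite S'" and cS': "card S' \<le> k"
    and nonneg: "\<forall>a\<in>S. 0 \<le> f a"
    and opt: "\<forall>b\<in>S' - S. f b \<le> 0 \<or> (k \<le> card S \<and> (\<forall>w\<in>S. f b \<le> f w))"
  shows "sum f S' \<le> sum f S"
proof -
  have e1: "sum f S' = sum f (S' \<inter> S) + sum f (S' - S)" using finS' by (rule sum.Int_Diff)
  have e2: "sum f S = sum f (S \<inter> S') + sum f (S - S')" using finS by (rule sum.Int_Diff)
  have "sum f (S' - S) \<le> sum f (S - S')"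
  proof (cases "k \<le> card S")
    case True
    have c1: "card S' = card (S' \<inter> S) + card (S' - S)"
      using finS' by (metis card_Int_Diff)
    have c2: "card S = card (S \<inter> S') + card (S - S')"
      using finS by (metis card_Int_Diff)
    have cle: "card (S' - S) \<le> card (S - S')" using c1 c2 cS' True by (simp add: Int_commute)
    show ?thesis
    proof (cases "S - S' = {}")
      case True
      have c0: "card (S - S') = 0" using True by (simp only: card.empty)
      have "card (S' - S) = 0" using cle c0 by linarith
      then have "S' - S = {}" using finS' by simp
      then have "sum f (S' - S) = 0" by (simp only: sum.empty)
      moreover have "0 \<le> sum f (S - S')" using nonneg by (intro sum_nonneg) auto
      ultimately show ?thesis by linarith
    next
      case False
      define \<mu> where "\<mu> = Min (f ` (S - S'))"
      have fin: "finite (S - S')" using finS by simp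
      have "\<mu> \<in> f ` (S - S')" unfolding \<mu>_def using fin False by (intro Min_in) auto
      then obtain w0 where w0: "w0 \<in> S - S'" "\<mu> = f w0" by auto
      have mu0: "0 \<le> \<mu>" using w0 nonneg by auto
      have below: "\<mu> \<le> f w" if "w \<in> S - S'" for w unfolding \<mu>_def using fin that by (intro Min_le) auto
      have above: "f b \<le> \<mu>" if "b \<in> S' - S" for b
        using opt that w0 mu0 by force
      have "sum f (S' - S) \<le> of_nat (card (S' - S)) * \<mu>"
        using above by (intro sum_bounded_above) auto
      also have "\<dots> \<le> of_nat (card (S - S')) * \<mu>" using cle mu0 by (intro mult_right_mono) auto
      also have "\<dots> \<le> sum f (S - S')" using below by (intro sum_bounded_below) auto
      finally show ?thesis .
    qed
  next
    case False
    have "sum f (S' - S) \<le> 0" using opt False by (intro sum_nonpos) auto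
    also have "0 \<le> sum f (S - S')" using nonneg by (intro sum_nonneg) auto
    finally show ?thesis .
  qed
  then show ?thesis using e1 e2 by (simp add: Int_commute)
qed

lemma SW_decomp:
  assumes prof: "profile m n s"
  shows "SW n k pr x y s = (\<Sum>j<m. \<Sum>a\<in>Sv n k pr x y s j. 1 - \<bar>x a - y j\<bar>)"
proof -
  have "SW n k pr x y s = (\<Sum>i\<in>{..<n}. if served n k pr x y s i then 1 - \<bar>x i - y (s i)\<bar> else 0)"
    by (simp add: SW_def util_def)
  also have "\<dots> = (\<Sum>i\<in>{i\<in>{..<n}. served n k pr x y s i}. 1 - \<bar>x i - y (s i)\<bar>)"
    by (rule sum.inter_filter[symmetric]) simp
  also have "{i\<in>{..<n}. served n k pr x y s i} = (\<Union>j\<in>{..<m}. Sv n k pr x y s j)"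
    using prof by (auto simp: Sv_def profile_def)
  also have "(\<Sum>i\<in>(\<Union>j\<in>{..<m}. Sv n k pr x y s j). 1 - \<bar>x i - y (s i)\<bar>)
      = (\<Sum>j<m. \<Sum>i\<in>Sv n k pr x y s j. 1 - \<bar>x i - y (s i)\<bar>)"
    by (rule sum.UNION_disjoint) (auto simp: Sv_def)
  also have "\<dots> = (\<Sum>j<m. \<Sum>a\<in>Sv n k pr x y s j. 1 - \<bar>x a - y j\<bar>)"
    by (intro sum.cong refl) (auto simp: Sv_def)
  finally show ?thesis .
qed

lemma SW_k0: "SW n 0 pr x y s = 0"
  by (simp add: SW_def util_def served_def)

lemma NE_SW_eq:
  assumes inj: "inj_on pr {0..<n}" and k1: "1 \<le> k"
    and ne1: "is_NE m n k pr x y g" and ne2: "is_NE m n k pr x y g'"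
    and py: "\<forall>j<m. p j < n \<and> y j = sort (map x [0..<n]) ! p j"
    and gap: "\<forall>j l. j \<le> l \<longrightarrow> l < m \<longrightarrow> p j + (l - j) * (2 * k - 1) \<le> p l"
    and vx: "\<forall>a<n. x a \<in> {0..1}" and vy: "\<forall>j<m. y j \<in> {0..1}"
  shows "SW n k pr x y g = SW n k pr x y g'"
proof -
  have key: "(\<Sum>a\<in>Sv n k pr x y h' j. 1 - \<bar>x a - y j\<bar>) \<le> (\<Sum>a\<in>Sv n k pr x y h j. 1 - \<bar>x a - y j\<bar>)"
    if h: "is_NE m n k pr x y h" and h': "is_NE m n k pr x y h'" and j: "j < m" for h h' j
  proof (rule opt_sum)
    show "finite (Sv n k pr x y h j)" "finite (Sv n k pr x y h' j)" by simp_all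
    show "card (Sv n k pr x y h' j) \<le> k" by (rule card_Sv_le[OF inj])
    show "\<forall>a\<in>Sv n k pr x y h j. 0 \<le> 1 - \<bar>x a - y j\<bar>"
    proof
      fix a assume "a \<in> Sv n k pr x y h j"
      then have "a < n" by (simp add: Sv_def)
      then show "0 \<le> 1 - \<bar>x a - y j\<bar>" using vx vy j by fastforce
    qed
    show "\<forall>b\<in>Sv n k pr x y h' j - Sv n k pr x y h j. 1 - \<bar>x b - y j\<bar> \<le> 0 \<or>
        (k \<le> card (Sv n k pr x y h j) \<and> (\<forall>w\<in>Sv n k pr x y h j. 1 - \<bar>x b - y j\<bar> \<le> 1 - \<bar>x w - y j\<bar>))"
    proof
      fix b assume b: "b \<in> Sv n k pr x y h' j - Sv n k pr x y h j"
      then have bn: "b < n" by (simp add: Sv_def)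
      have "\<not> viol m n k pr x y h b j" by (rule no_viol[OF inj k1 h py gap])
      then show "1 - \<bar>x b - y j\<bar> \<le> 0 \<or>
        (k \<le> card (Sv n k pr x y h j) \<and> (\<forall>w\<in>Sv n k pr x y h j. 1 - \<bar>x b - y j\<bar> \<le> 1 - \<bar>x w - y j\<bar>))"
        using bn j b unfolding viol_def by force
    qed
  qed
  have "SW n k pr x y g = (\<Sum>j<m. \<Sum>a\<in>Sv n k pr x y g j. 1 - \<bar>x a - y j\<bar>)"
    using ne1 SW_decomp[of m n g] unfolding is_NE_def by simp
  also have "\<dots> = (\<Sum>j<m. \<Sum>a\<in>Sv n k pr x y g' j. 1 - \<bar>x a - y j\<bar>)"
    apply (rule sum.cong[OF refl])
    using key[OF ne1 ne2] key[OF ne2 ne1] by (meson lessThan_iff order_antisym)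
  also have "\<dots> = SW n k pr x y g'"
    using ne2 SW_decomp[of m n g'] unfolding is_NE_def by simp
  finally show ?thesis .
qed

lemma ES_if:
  assumes inj: "inj_on pr {0..<n}" and n0: "0 < n" and m0: "0 < m"
    and v: "\<forall>j<m. v j \<in> {0..1}"
    and gaps: "\<forall>j. j + 1 < m \<longrightarrow>
       \<lfloor>v (j + 1) * real (n - 1)\<rfloor> - \<lfloor>v j * real (n - 1)\<rfloor> \<ge> 2 * int k - 1"
  shows "equilibrium_stable m n k pr (PM n v)"
  unfolding equilibrium_stable_def
proof (intro conjI allI impI)
  show "abs_truthful m n k pr (PM n v)" by (rule PM_truthful[OF v n0 m0])
next
  fix x g g'
  assume vx: "valid_pos n x" and ne1: "is_NE m n k pr x (PM n v x) g" and ne2: "is_NE m n k pr x (PM n v x) g'"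
  show "SW n k pr x (PM n v x) g = SW n k pr x (PM n v x) g'"
  proof (cases "k = 0")
    case True then show ?thesis by (simp add: SW_k0)
  next
    case False
    then have k1: "1 \<le> k" by simp
    define p where "p j = nat \<lfloor>v j * real (n - 1)\<rfloor>" for j
    have py: "\<forall>j<m. p j < n \<and> PM n v x j = sort (map x [0..<n]) ! p j"
      using pidx_lt[OF _ n0] v by (auto simp: p_def PM_nth)
    have cons: "\<forall>j. j + 1 < m \<longrightarrow> p j + (2 * k - 1) \<le> p (j + 1)"
    proof (intro allI impI)
      fix j assume j: "j + 1 < m"
      have f0: "0 \<le> \<lfloor>v j * real (n - 1)\<rfloor>" using v j by auto
      have "\<lfloor>v (j + 1) * real (n - 1)\<rfloor> - \<lfloor>v j * real (n - 1)\<rfloor> \<ge> 2 * int k - 1" using gaps j by blast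
      then show "p j + (2 * k - 1) \<le> p (j + 1)" unfolding p_def using f0 k1 by linarith
    qed
    have gap: "\<forall>j l. j \<le> l \<longrightarrow> l < m \<longrightarrow> p j + (l - j) * (2 * k - 1) \<le> p l"
      using gap_gen[OF cons] by blast
    show ?thesis
    proof (rule NE_SW_eq[OF inj k1 ne1 ne2 py gap])
      show "\<forall>a<n. x a \<in> {0..1}" using vx by (simp add: valid_pos_def)
      show "\<forall>j<m. PM n v x j \<in> {0..1}" using PM_in01[OF vx _ n0] v by blast
    qed
  qed
qed

lemma nearest_ok:
  assumes sv: "served n k pr x y s t" and stm: "s t < m"
    and near: "\<forall>j<m. \<bar>x t - y (s t)\<bar> \<le> \<bar>x t - y j\<bar>"
    and le1: "\<forall>j<m. \<bar>x t - y j\<bar> \<le> 1" and j: "j < m"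
  shows "util n k pr x y (s(t := j)) t \<le> util n k pr x y s t"
proof -
  have "util n k pr x y (s(t := j)) t \<le> 1 - \<bar>x t - y j\<bar>"
    using le1 j by (simp add: util_def)
  also have "\<dots> \<le> 1 - \<bar>x t - y (s t)\<bar>" using near j by auto
  also have "\<dots> = util n k pr x y s t" using sv by (simp add: util_def)
  finally show ?thesis .
qed

lemma dev_le: "\<bar>x t - y j\<bar> \<le> 1 \<Longrightarrow> util n k pr x y (s(t := j)) t \<le> 1 - \<bar>x t - y j\<bar>"
  by (simp add: util_def)

lemma dev_far: "1 \<le> \<bar>x t - y j\<bar> \<Longrightarrow> util n k pr x y (s(t := j)) t \<le> 0"
  by (simp add: util_def)

lemma dev_zero:
  assumes "finite K" "k \<le> card K" "K \<subseteq> {a. a < n \<and> a \<noteq> t \<and> s a = j \<and> beats pr x (y j) a t}"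
  shows "util n k pr x y (s(t := j)) t = 0"
proof -
  have "card K \<le> card {a. a < n \<and> a \<noteq> t \<and> s a = j \<and> beats pr x (y j) a t}"
    using assms(3) by (intro card_mono) auto
  then show ?thesis using assms(2) by (simp add: util_dev)
qed

lemma served_by:
  assumes "{a. a < n \<and> s a = s t \<and> beats pr x (y (s t)) a t} \<subseteq> K" "finite K" "card K < k"
  shows "served n k pr x y s t"
proof -
  have "{a \<in> Ch n s (s t). beats pr x (y (s t)) a t} \<subseteq> K" using assms(1) by (auto simp: Ch_def)
  then have "card {a \<in> Ch n s (s t). beats pr x (y (s t)) a t} \<le> card K"
    using assms(2) by (intro card_mono)
  then show ?thesis using assms(3) by (simp add: served_alt)
qed

lemma beats_id: "beats (\<lambda>i. i) x yj a b \<longleftrightarrow>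
   \<bar>x a - yj\<bar> < \<bar>x b - yj\<bar> \<or> (\<bar>x a - yj\<bar> = \<bar>x b - yj\<bar> \<and> a < b)"
  by (simp add: beats_def)

locale constr =
  fixes n m k :: nat and p :: "nat \<Rightarrow> nat" and j0 :: nat
  assumes pinc: "\<And>j. j + 1 < m \<Longrightarrow> p j < p (j + 1)"
    and plt: "\<And>j. j < m \<Longrightarrow> p j < n"
    and j0m: "j0 + 1 < m"
    and g2: "p j0 + 2 \<le> p (j0 + 1)"
    and gk: "p (j0 + 1) + 2 \<le> p j0 + 2 * k"
    and enough: "p (j0 + 1) + 1 + (m - j0 - 2) * k + (k + 1 + (p (j0 + 1) - p j0 - k) - (p (j0 + 1) - p j0)) \<le> n"
begin

definition "P0 = p j0"
definition "Q0 = p (j0 + 1)"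
definition "g = Q0 - P0"
definition "aa = g - k"
definition "\<sigma> = k + 1 + aa - g"
definition "R0 = Q0 + 1 + (m - j0 - 2) * k"
definition "Mr = P0 + aa + 1"
definition "Dr = R0 + \<sigma> - 1"

lemma k2: "2 \<le> k" using g2 gk by simp
lemma g_bounds: "2 \<le> g" "g + 2 \<le> 2 * k" "Q0 = P0 + g"
  using g2 gk by (auto simp: g_def P0_def Q0_def)
lemma aa_le: "aa + 2 \<le> k" using g_bounds by (simp add: aa_def)
lemma Mr_lt: "Mr < Q0" using g_bounds k2 by (simp add: Mr_def aa_def)
lemma sigma_pos: "1 \<le> \<sigma>" using g_bounds by (simp add: \<sigma>_def aa_def)
lemma st_sigma: "Q0 - Mr + \<sigma> = k" using g_bounds k2 by (simp add: \<sigma>_def aa_def Mr_def)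
lemma Dr_lt: "Dr < n" using enough sigma_pos
  by (simp add: Dr_def R0_def \<sigma>_def aa_def g_def P0_def Q0_def)
lemma R0_le_Dr: "R0 \<le> Dr" using sigma_pos by (simp add: Dr_def)
lemma Q0_lt_R0: "Q0 < R0" by (simp add: R0_def)
lemma P0_le_Mr: "P0 + aa < Mr" by (simp add: Mr_def)

lemma p_mono: "i < j \<Longrightarrow> j < m \<Longrightarrow> p i < p j"
proof (induction j)
  case 0 then show ?case by simp
next
  case (Suc j)
  then have "p j < p (Suc j)" using pinc[of j] by simp
  then show ?case using Suc by (cases "i = j") auto
qed

lemma p_left: "j < j0 \<Longrightarrow> p j < P0" using p_mono j0m by (simp add: P0_def)
lemma p_right: "j0 + 1 < j \<Longrightarrow> j < m \<Longrightarrow> Q0 < p j" using p_mono by (simp add: Q0_def)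

definition \<phi> :: "nat \<Rightarrow> real" where
  "\<phi> t = (if t < P0 then 0 else if t \<le> P0 + aa then 7/10 else if t = Mr then 8/10
          else if t \<le> Q0 then 9/10 else 1)"

definition yy :: "nat \<Rightarrow> real" where "yy j = \<phi> (p j)"

lemma phi_C0: "t < P0 \<Longrightarrow> \<phi> t = 0" by (simp add: \<phi>_def)
lemma phi_C3: "P0 \<le> t \<Longrightarrow> t \<le> P0 + aa \<Longrightarrow> \<phi> t = 7/10" by (simp add: \<phi>_def)
lemma phi_M: "\<phi> Mr = 8/10" by (simp add: \<phi>_def Mr_def)
lemma phi_C5: "Mr < t \<Longrightarrow> t \<le> Q0 \<Longrightarrow> \<phi> t = 9/10" using P0_le_Mr by (simp add: \<phi>_def)
lemma phi_C6: "Q0 < t \<Longrightarrow> \<phi> t = 1" using Mr_lt P0_le_Mr by (simp add: \<phi>_def)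

lemma phi_cases: "\<phi> t = 0 \<or> \<phi> t = 7/10 \<or> \<phi> t = 8/10 \<or> \<phi> t = 9/10 \<or> \<phi> t = 1"
  by (simp add: \<phi>_def)

lemma phi_eq_0: "\<phi> t = 0 \<longleftrightarrow> t < P0" by (auto simp: \<phi>_def)
lemma phi_eq_7: "\<phi> t = 7/10 \<longleftrightarrow> P0 \<le> t \<and> t \<le> P0 + aa" by (auto simp: \<phi>_def)
lemma phi_eq_8: "\<phi> t = 8/10 \<longleftrightarrow> t = Mr" using P0_le_Mr by (auto simp: \<phi>_def)
lemma phi_eq_9: "\<phi> t = 9/10 \<longleftrightarrow> Mr < t \<and> t \<le> Q0" using P0_le_Mr by (auto simp: \<phi>_def Mr_def)
lemma phi_eq_1: "\<phi> t = 1 \<longleftrightarrow> Q0 < t" using P0_le_Mr Mr_lt by (auto simp: \<phi>_def)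

lemma yy_left: "j < j0 \<Longrightarrow> yy j = 0" using p_left by (simp add: yy_def phi_C0)
lemma yy_j0: "yy j0 = 7/10" by (simp add: yy_def phi_C3 P0_def)
lemma yy_j1: "yy (j0 + 1) = 9/10" using Mr_lt P0_le_Mr by (simp add: yy_def \<phi>_def Q0_def)
lemma yy_right: "j0 + 1 < j \<Longrightarrow> j < m \<Longrightarrow> yy j = 1" using p_right by (simp add: yy_def phi_C6)

lemma yy_cases: "j < m \<Longrightarrow> (j < j0 \<and> yy j = 0) \<or> (j = j0 \<and> yy j = 7/10) \<or> (j = j0 + 1 \<and> yy j = 9/10)
   \<or> (j0 + 1 < j \<and> yy j = 1)"
  using yy_left yy_j0 yy_j1 yy_right by (metis linorder_neqE_nat Suc_eq_plus1 less_SucE not_less_eq)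

definition strat :: "bool \<Rightarrow> nat \<Rightarrow> nat" where
  "strat f t = (if t < P0 then (if t < j0 * k then t div k else j0)
     else if t \<le> P0 + aa then j0
     else if t = Mr then (if f then j0 + 1 else j0)
     else if t \<le> Q0 then j0 + 1
     else if t < R0 then j0 + 2 + (t - Q0 - 1) div k
     else if t < Dr then j0 + 1
     else if t = Dr then (if f then j0 else j0 + 1)
     else j0)"

lemma strat_C1: "t < P0 \<Longrightarrow> t < j0 * k \<Longrightarrow> strat f t = t div k" by (simp add: strat_def)
lemma strat_C2: "t < P0 \<Longrightarrow> j0 * k \<le> t \<Longrightarrow> strat f t = j0" by (simp add: strat_def)
lemma strat_C3: "P0 \<le> t \<Longrightarrow> t \<le> P0 + aa \<Longrightarrow> strat f t = j0" by (simp add: strat_def)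
lemma strat_M: "strat f Mr = (if f then j0 + 1 else j0)" using P0_le_Mr by (simp add: strat_def)
lemma strat_C5: "Mr < t \<Longrightarrow> t \<le> Q0 \<Longrightarrow> strat f t = j0 + 1" using P0_le_Mr by (simp add: strat_def)
lemma strat_C6: "Q0 < t \<Longrightarrow> t < R0 \<Longrightarrow> strat f t = j0 + 2 + (t - Q0 - 1) div k"
  using P0_le_Mr Mr_lt by (simp add: strat_def)
lemma strat_C7: "R0 \<le> t \<Longrightarrow> t < Dr \<Longrightarrow> strat f t = j0 + 1"
  using P0_le_Mr Mr_lt Q0_lt_R0 by (simp add: strat_def)
lemma strat_D: "strat f Dr = (if f then j0 else j0 + 1)"
  using P0_le_Mr Mr_lt Q0_lt_R0 R0_le_Dr by (simp add: strat_def)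
lemma strat_C9: "Dr < t \<Longrightarrow> strat f t = j0"
  using P0_le_Mr Mr_lt Q0_lt_R0 R0_le_Dr by (simp add: strat_def)

lemma C1_div: "t < P0 \<Longrightarrow> t < j0 * k \<Longrightarrow> t div k < j0"
  by (simp add: less_mult_imp_div_less)

lemma C6_div: "Q0 < t \<Longrightarrow> t < R0 \<Longrightarrow> j0 + 2 + (t - Q0 - 1) div k < m"
proof -
  assume "Q0 < t" "t < R0"
  then have "t - Q0 - 1 < (m - j0 - 2) * k" by (simp add: R0_def)
  then have "(t - Q0 - 1) div k < m - j0 - 2" by (simp add: less_mult_imp_div_less)
  then show ?thesis by simp
qed

lemma strat_lt: "strat f t < m"
proof -
  have "t div k < j0" if "t < P0" "t < j0 * k" using C1_div that .
  then show ?thesis using j0m C6_div unfolding strat_def by auto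
qed

lemma profile_strat: "profile m n (strat f)" by (simp add: profile_def strat_lt)

end

context constr begin

lemma yy_j1': "yy (Suc j0) = 9/10" using yy_j1 by simp

lemma phi_01: "0 \<le> \<phi> t \<and> \<phi> t \<le> 1" by (simp add: \<phi>_def)
lemma yy_01: "0 \<le> yy j \<and> yy j \<le> 1" by (simp add: yy_def phi_01)
lemma dist_le1: "\<bar>\<phi> t - yy j\<bar> \<le> 1" using phi_01[of t] yy_01[of j] by auto

lemma strat_j0_iff: "strat f a = j0 \<longleftrightarrow>
   (a < P0 \<and> j0 * k \<le> a) \<or> (P0 \<le> a \<and> a \<le> P0 + aa) \<or> (a = Mr \<and> \<not> f) \<or> (a = Dr \<and> f) \<or> Dr < a"
proof -
  have h1: "a < P0 \<Longrightarrow> a < j0 * k \<Longrightarrow> a div k < j0" by (rule C1_div)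
  show ?thesis
    using P0_le_Mr Mr_lt Q0_lt_R0 R0_le_Dr h1 unfolding strat_def Mr_def by auto
qed

lemma strat_j1_iff: "strat f a = j0 + 1 \<longleftrightarrow>
   (a = Mr \<and> f) \<or> (Mr < a \<and> a \<le> Q0) \<or> (R0 \<le> a \<and> a < Dr) \<or> (a = Dr \<and> \<not> f)"
proof -
  have h1: "a < P0 \<Longrightarrow> a < j0 * k \<Longrightarrow> a div k < j0" by (rule C1_div)
  show ?thesis
    using P0_le_Mr Mr_lt Q0_lt_R0 R0_le_Dr h1 unfolding strat_def Mr_def by auto
qed

lemma strat_lt_j0: "strat f a < j0 \<Longrightarrow> a < P0 \<and> a < j0 * k \<and> strat f a = a div k"
  unfolding strat_def by (auto split: if_splits)

lemma strat_gt_j1: "j0 + 1 < strat f a \<Longrightarrow> Q0 < a \<and> a < R0 \<and> strat f a = j0 + 2 + (a - Q0 - 1) div k"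
proof -
  assume h: "j0 + 1 < strat f a"
  have h1: "a < P0 \<Longrightarrow> a < j0 * k \<Longrightarrow> a div k < j0" by (rule C1_div)
  show ?thesis using h h1 P0_le_Mr unfolding strat_def by (auto split: if_splits)
qed

abbreviation "U f \<equiv> util n k (\<lambda>i. i) \<phi> yy (strat f)"
abbreviation "UD f t j \<equiv> util n k (\<lambda>i. i) \<phi> yy ((strat f)(t := j)) t"
abbreviation "SV f t \<equiv> served n k (\<lambda>i. i) \<phi> yy (strat f) t"

lemma block_card: "card ({b * k..<b * k + k} - {t}) < k" if "t \<in> {b * k..<b * k + k}"
  using that k2 by (simp add: card_Diff_singleton)

lemma div_block: "t \<in> {(t div k) * k..<(t div k) * k + k}"
proof -
  have e: "t div k * k + t mod k = t" by (rule div_mult_mod_eq)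
  have l: "t mod k < k" using k2 by simp
  show ?thesis using e l unfolding atLeastLessThan_iff by linarith
qed

lemma sv_C1: assumes "t < P0" "t < j0 * k" shows "SV f t"
proof (rule served_by)
  let ?b = "t div k"
  show "{a. a < n \<and> strat f a = strat f t \<and> beats (\<lambda>i. i) \<phi> (yy (strat f t)) a t} \<subseteq> {?b * k..<?b * k + k} - {t}"
  proof
    fix a assume a: "a \<in> {a. a < n \<and> strat f a = strat f t \<and> beats (\<lambda>i. i) \<phi> (yy (strat f t)) a t}"
    have st: "strat f t = ?b" "?b < j0" using strat_C1 C1_div assms by auto
    have lt: "strat f a < j0" using a st by simp
    have "strat f a = a div k" using strat_lt_j0[OF lt] by blast
    then have "a div k = ?b" using a st by simp
    moreover have "a \<noteq> t" using a beats_irrefl by auto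
    ultimately show "a \<in> {?b * k..<?b * k + k} - {t}" using div_block[of a] by simp
  qed
  show "finite ({?b * k..<?b * k + k} - {t})" by simp
  show "card ({?b * k..<?b * k + k} - {t}) < k" by (rule block_card[OF div_block])
qed

lemma sv_C3: assumes "P0 \<le> t" "t \<le> P0 + aa" shows "SV f t"
proof (rule served_by)
  show "{a. a < n \<and> strat f a = strat f t \<and> beats (\<lambda>i. i) \<phi> (yy (strat f t)) a t} \<subseteq> {P0..<t}"
  proof
    fix a assume a: "a \<in> {a. a < n \<and> strat f a = strat f t \<and> beats (\<lambda>i. i) \<phi> (yy (strat f t)) a t}"
    have st: "strat f t = j0" using strat_C3 assms by auto
    have pt: "\<phi> t = 7/10" using phi_C3 assms by auto
    have b: "\<bar>\<phi> a - 7/10\<bar> < 0 \<or> (\<bar>\<phi> a - 7/10\<bar> = 0 \<and> a < t)"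
      using a st by (simp add: beats_id pt yy_j0)
    then have "\<phi> a = 7/10" "a < t" by auto
    then show "a \<in> {P0..<t}" using phi_eq_7 by auto
  qed
  show "finite {P0..<t}" by simp
  show "card {P0..<t} < k" using assms aa_le by simp
qed

lemma sv_M: "SV f Mr"
proof (cases f)
  case True
  show ?thesis
  proof (rule served_by)
    show "{a. a < n \<and> strat f a = strat f Mr \<and> beats (\<lambda>i. i) \<phi> (yy (strat f Mr)) a Mr} \<subseteq> {Mr<..Q0}"
    proof
      fix a assume a: "a \<in> {a. a < n \<and> strat f a = strat f Mr \<and> beats (\<lambda>i. i) \<phi> (yy (strat f Mr)) a Mr}"
      have st: "strat f Mr = j0 + 1" using strat_M True by auto
      have b: "\<bar>\<phi> a - 9/10\<bar> < 1/10 \<or> (\<bar>\<phi> a - 9/10\<bar> = 1/10 \<and> a < Mr)"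
        using a st by (simp add: beats_id phi_M yy_j1')
      have sa: "strat f a = j0 + 1" using a st by simp
      show "a \<in> {Mr<..Q0}"
      proof -
        have "(a = Mr \<and> f) \<or> (Mr < a \<and> a \<le> Q0) \<or> (R0 \<le> a \<and> a < Dr) \<or> (a = Dr \<and> \<not> f)"
          using sa strat_j1_iff by blast
        moreover have "a \<noteq> Mr" using a beats_irrefl by auto
        moreover have "\<not> (R0 \<le> a \<and> a < Dr)"
        proof
          assume "R0 \<le> a \<and> a < Dr"
          then have "\<phi> a = 1" using phi_C6 Q0_lt_R0 by auto
          then show False using b Mr_lt Q0_lt_R0 \<open>R0 \<le> a \<and> a < Dr\<close> by auto
        qed
        ultimately show ?thesis using True by auto
      qed
    qed
    show "finite {Mr<..Q0}" by simp
    show "card {Mr<..Q0} < k" using st_sigma sigma_pos by simp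
  qed
next
  case False
  show ?thesis
  proof (rule served_by)
    show "{a. a < n \<and> strat f a = strat f Mr \<and> beats (\<lambda>i. i) \<phi> (yy (strat f Mr)) a Mr} \<subseteq> {P0..P0 + aa}"
    proof
      fix a assume a: "a \<in> {a. a < n \<and> strat f a = strat f Mr \<and> beats (\<lambda>i. i) \<phi> (yy (strat f Mr)) a Mr}"
      have st: "strat f Mr = j0" using strat_M False by auto
      have b: "\<bar>\<phi> a - 7/10\<bar> < 1/10 \<or> (\<bar>\<phi> a - 7/10\<bar> = 1/10 \<and> a < Mr)"
        using a st by (simp add: beats_id phi_M yy_j0)
      have "\<phi> a = 7/10"
      proof -
        have "a \<noteq> Mr" using a beats_irrefl by auto
        then have "\<phi> a \<noteq> 8/10" using phi_eq_8 by auto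
        then show ?thesis using b phi_cases[of a] by auto
      qed
      then show "a \<in> {P0..P0 + aa}" using phi_eq_7 by auto
    qed
    show "finite {P0..P0 + aa}" by simp
    show "card {P0..P0 + aa} < k" using aa_le by simp
  qed
qed

lemma sv_C5: assumes "Mr < t" "t \<le> Q0" shows "SV f t"
proof (rule served_by)
  show "{a. a < n \<and> strat f a = strat f t \<and> beats (\<lambda>i. i) \<phi> (yy (strat f t)) a t} \<subseteq> {Mr<..<t}"
  proof
    fix a assume a: "a \<in> {a. a < n \<and> strat f a = strat f t \<and> beats (\<lambda>i. i) \<phi> (yy (strat f t)) a t}"
    have st: "strat f t = j0 + 1" using strat_C5 assms by auto
    have pt: "\<phi> t = 9/10" using phi_C5 assms by auto
    have b: "\<bar>\<phi> a - 9/10\<bar> < 0 \<or> (\<bar>\<phi> a - 9/10\<bar> = 0 \<and> a < t)"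
      using a st by (simp add: beats_id pt yy_j1')
    then have "\<phi> a = 9/10" "a < t" by auto
    then show "a \<in> {Mr<..<t}" using phi_eq_9 by auto
  qed
  show "finite {Mr<..<t}" by simp
  show "card {Mr<..<t} < k" using assms st_sigma sigma_pos by simp
qed

lemma sv_C6: assumes "Q0 < t" "t < R0" shows "SV f t"
proof (rule served_by)
  let ?b = "(t - Q0 - 1) div k"
  let ?B = "(\<lambda>u. u + (Q0 + 1)) ` ({?b * k..<?b * k + k} - {t - Q0 - 1})"
  show "{a. a < n \<and> strat f a = strat f t \<and> beats (\<lambda>i. i) \<phi> (yy (strat f t)) a t} \<subseteq> ?B"
  proof
    fix a assume a: "a \<in> {a. a < n \<and> strat f a = strat f t \<and> beats (\<lambda>i. i) \<phi> (yy (strat f t)) a t}"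
    have st: "strat f t = j0 + 2 + ?b" using strat_C6 assms by auto
    have gt: "j0 + 1 < strat f a" using a st by simp
    have ha: "Q0 < a" "a < R0" "strat f a = j0 + 2 + (a - Q0 - 1) div k" using strat_gt_j1[OF gt] by auto
    then have "(a - Q0 - 1) div k = ?b" using a st by simp
    moreover have "a \<noteq> t" using a beats_irrefl by auto
    ultimately have "a - Q0 - 1 \<in> {?b * k..<?b * k + k} - {t - Q0 - 1}"
      using div_block[of "a - Q0 - 1"] ha assms by auto
    moreover have "a = (a - Q0 - 1) + (Q0 + 1)" using ha by simp
    ultimately show "a \<in> ?B" by blast
  qed
  show "finite ?B" by simp
  have "card ?B \<le> card ({?b * k..<?b * k + k} - {t - Q0 - 1})" by (rule card_image_le) simp
  also have "\<dots> < k" by (rule block_card[OF div_block])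
  finally show "card ?B < k" .
qed

lemma sv_R: assumes "R0 \<le> t" "t < Dr \<or> (t = Dr \<and> \<not> f)" shows "SV f t"
proof (rule served_by)
  let ?K = "(if f then {Mr..Q0} else {Mr<..Q0}) \<union> {R0..<t}"
  show "{a. a < n \<and> strat f a = strat f t \<and> beats (\<lambda>i. i) \<phi> (yy (strat f t)) a t} \<subseteq> ?K"
  proof
    fix a assume a: "a \<in> {a. a < n \<and> strat f a = strat f t \<and> beats (\<lambda>i. i) \<phi> (yy (strat f t)) a t}"
    have st: "strat f t = j0 + 1" using strat_C7 strat_D assms by auto
    have pt: "\<phi> t = 1" using phi_C6 assms Q0_lt_R0 by auto
    have sa: "strat f a = j0 + 1" using a st by simp
    have b: "\<bar>\<phi> a - 9/10\<bar> < 1/10 \<or> (\<bar>\<phi> a - 9/10\<bar> = 1/10 \<and> a < t)"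
      using a st by (simp add: beats_id pt yy_j1')
    have cs: "(a = Mr \<and> f) \<or> (Mr < a \<and> a \<le> Q0) \<or> (R0 \<le> a \<and> a < Dr) \<or> (a = Dr \<and> \<not> f)"
      using sa strat_j1_iff by blast
    have far: "a < t" if "R0 \<le> a"
    proof -
      have "\<phi> a = 1" using phi_C6 Q0_lt_R0 that by auto
      then show ?thesis using b by auto
    qed
    show "a \<in> ?K"
    proof (cases f)
      case True then show ?thesis using cs far R0_le_Dr Mr_lt by auto
    next
      case False then show ?thesis using cs far R0_le_Dr by auto
    qed
  qed
  show "finite ?K" by simp
  have "card ?K \<le> card (if f then {Mr..Q0} else {Mr<..Q0}) + card {R0..<t}" by (rule card_Un_le)
  also have "\<dots> < k" using assms st_sigma sigma_pos Mr_lt by (cases f) (auto simp: Dr_def)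
  finally show "card ?K < k" .
qed

lemma sv_DT: "SV True Dr"
proof (rule served_by)
  show "{a. a < n \<and> strat True a = strat True Dr \<and> beats (\<lambda>i. i) \<phi> (yy (strat True Dr)) a Dr} \<subseteq> {P0..P0 + aa}"
  proof
    fix a assume a: "a \<in> {a. a < n \<and> strat True a = strat True Dr \<and> beats (\<lambda>i. i) \<phi> (yy (strat True Dr)) a Dr}"
    have st: "strat True Dr = j0" using strat_D by auto
    have pt: "\<phi> Dr = 1" using phi_C6 R0_le_Dr Q0_lt_R0 by auto
    have sa: "strat True a = j0" using a st by simp
    have b: "\<bar>\<phi> a - 7/10\<bar> < 3/10 \<or> (\<bar>\<phi> a - 7/10\<bar> = 3/10 \<and> a < Dr)"
      using a st by (simp add: beats_id pt yy_j0)
    have cs: "(a < P0 \<and> j0 * k \<le> a) \<or> (P0 \<le> a \<and> a \<le> P0 + aa) \<or> (a = Mr \<and> \<not> True) \<or> (a = Dr \<and> True) \<or> Dr < a"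
      using sa strat_j0_iff by blast
    have n1: "\<not> (a < P0)"
    proof
      assume "a < P0" then have "\<phi> a = 0" by (rule phi_C0)
      then show False using b by auto
    qed
    have n2: "\<not> (Dr \<le> a)"
    proof
      assume "Dr \<le> a" then have "\<phi> a = 1" using phi_C6 Q0_lt_R0 R0_le_Dr by auto
      then show False using b \<open>Dr \<le> a\<close> by auto
    qed
    show "a \<in> {P0..P0 + aa}" using cs n1 n2 by auto
  qed
  show "finite {P0..P0 + aa}" by simp
  show "card {P0..P0 + aa} < k" using aa_le by simp
qed

end

context constr begin

lemma U_served: "SV f t \<Longrightarrow> U f t = 1 - \<bar>\<phi> t - yy (strat f t)\<bar>" by (simp add: util_def)

lemma ne_near:
  assumes "SV f t" "\<forall>j<m. \<bar>\<phi> t - yy (strat f t)\<bar> \<le> \<bar>\<phi> t - yy j\<bar>" "j < m"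
  shows "UD f t j \<le> U f t"
  by (rule nearest_ok[OF assms(1) strat_lt assms(2) _ assms(3)]) (simp add: dist_le1)

lemma rblock:
  assumes j1: "j0 + 1 < j" and jm: "j < m"
  defines "B \<equiv> {Q0 + 1 + (j - j0 - 2) * k..<Q0 + 1 + (j - j0 - 2) * k + k}"
  shows "card B = k" "a \<in> B \<Longrightarrow> Q0 < a \<and> a < R0 \<and> strat f a = j \<and> \<phi> a = 1"
proof -
  show "card B = k" by (simp add: B_def)
  assume a: "a \<in> B"
  have "(j - j0 - 2) * k + k \<le> (m - j0 - 2) * k"
  proof -
    have "j - j0 - 2 + 1 \<le> m - j0 - 2" using j1 jm by simp
    then have "(j - j0 - 2 + 1) * k \<le> (m - j0 - 2) * k" by (rule mult_right_mono) simp
    then show ?thesis by (simp add: algebra_simps)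
  qed
  then have lt: "Q0 < a" "a < R0" using a by (auto simp: B_def R0_def)
  define q where "q = j - j0 - 2"
  define r where "r = a - Q0 - 1 - q * k"
  have ur: "a - Q0 - 1 = q * k + r" "r < k" using a by (auto simp: B_def q_def r_def)
  have "(q * k + r) div k = q" using ur(2) k2 by simp
  then have "(a - Q0 - 1) div k = j - j0 - 2" using ur(1) by (simp add: q_def)
  then have "strat f a = j" using strat_C6[OF lt] j1 by simp
  then show "Q0 < a \<and> a < R0 \<and> strat f a = j \<and> \<phi> a = 1" using lt phi_C6 by simp
qed

lemma right_dev_zero:
  assumes j1: "j0 + 1 < j" and jm: "j < m" and t: "R0 \<le> t" "t < n"
  shows "UD f t j = 0"
proof -
  define B where "B = {Q0 + 1 + (j - j0 - 2) * k..<Q0 + 1 + (j - j0 - 2) * k + k}"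
  have cB: "card B = k" using rblock(1)[OF j1 jm] by (simp add: B_def)
  have pt: "\<phi> t = 1" using t Q0_lt_R0 phi_C6 by simp
  have yj: "yy j = 1" using yy_right[OF j1 jm] .
  show ?thesis
  proof (rule dev_zero)
    show "finite B" by (simp add: B_def)
    show "k \<le> card B" using cB by simp
    show "B \<subseteq> {a. a < n \<and> a \<noteq> t \<and> strat f a = j \<and> beats (\<lambda>i. i) \<phi> (yy j) a t}"
    proof
      fix a assume "a \<in> B"
      then have h: "Q0 < a" "a < R0" "strat f a = j" "\<phi> a = 1" using rblock(2)[OF j1 jm] by (auto simp: B_def)
      then show "a \<in> {a. a < n \<and> a \<noteq> t \<and> strat f a = j \<and> beats (\<lambda>i. i) \<phi> (yy j) a t}"
        using t pt yj by (auto simp: beats_id)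
    qed
  qed
qed

definition KR :: "bool \<Rightarrow> nat set" where
  "KR f = (if f then {Mr..Q0} \<union> {R0..<Dr} else {Mr<..Q0} \<union> {R0..Dr})"

lemma KR_card: "card (KR f) = k"
proof -
  have d1: "{Mr..Q0} \<inter> {R0..<Dr} = {}" "{Mr<..Q0} \<inter> {R0..Dr} = {}" using Q0_lt_R0 by auto
  show ?thesis
  proof (cases f)
    case True
    then have "card (KR f) = card {Mr..Q0} + card {R0..<Dr}" using d1 by (simp add: KR_def card_Un_disjoint)
    then show ?thesis using st_sigma Mr_lt sigma_pos by (simp add: Dr_def)
  next
    case False
    then have "card (KR f) = card {Mr<..Q0} + card {R0..Dr}" using d1 by (simp add: KR_def card_Un_disjoint)
    then show ?thesis using st_sigma Mr_lt sigma_pos R0_le_Dr by (simp add: Dr_def)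
  qed
qed

lemma KR_mem: "a \<in> KR f \<Longrightarrow> strat f a = j0 + 1 \<and> a \<le> Dr \<and> \<bar>\<phi> a - 9/10\<bar> \<le> 1/10 \<and> (f \<longrightarrow> a < Dr)"
proof -
  assume a: "a \<in> KR f"
  have cs: "(a = Mr \<and> f) \<or> (Mr < a \<and> a \<le> Q0) \<or> (R0 \<le> a \<and> a < Dr) \<or> (a = Dr \<and> \<not> f)"
    using a by (cases f) (auto simp: KR_def)
  have s: "strat f a = j0 + 1" using cs strat_j1_iff[of f a] by blast
  have le: "a \<le> Dr" "f \<longrightarrow> a < Dr" using cs Mr_lt Q0_lt_R0 R0_le_Dr by auto
  have "\<phi> a = 8/10 \<or> \<phi> a = 9/10 \<or> \<phi> a = 1"
    using cs phi_M phi_C5[of a] phi_C6[of a] Q0_lt_R0 R0_le_Dr by auto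
  then have "\<bar>\<phi> a - 9/10\<bar> \<le> 1/10" by auto
  then show ?thesis using s le by simp
qed

lemma KR_dev_zero:
  assumes t: "t < n" "t \<notin> KR f" and bt: "\<And>a. a \<in> KR f \<Longrightarrow> beats (\<lambda>i. i) \<phi> (9/10) a t"
  shows "UD f t (j0 + 1) = 0"
proof (rule dev_zero)
  show "finite (KR f)" by (simp add: KR_def)
  show "k \<le> card (KR f)" by (simp add: KR_card)
  show "KR f \<subseteq> {a. a < n \<and> a \<noteq> t \<and> strat f a = j0 + 1 \<and> beats (\<lambda>i. i) \<phi> (yy (j0 + 1)) a t}"
  proof
    fix a assume a: "a \<in> KR f"
    have h: "strat f a = j0 + 1" "a \<le> Dr" using KR_mem[OF a] by auto
    have "a \<noteq> t" using a t by auto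
    then show "a \<in> {a. a < n \<and> a \<noteq> t \<and> strat f a = j0 + 1 \<and> beats (\<lambda>i. i) \<phi> (yy (j0 + 1)) a t}"
      using h bt[OF a] Dr_lt by (simp add: yy_j1')
  qed
qed

end

context constr begin

lemma U_ge0: "0 \<le> U f t" by (rule util_ge0) (simp add: dist_le1)

lemma UD_triv: "UD f t (strat f t) = U f t" by simp

lemma ne_C1: assumes "t < P0" "t < j0 * k" "j < m" shows "UD f t j \<le> U f t"
proof (rule ne_near[OF sv_C1[OF assms(1,2)] _ assms(3)])
  have "yy (strat f t) = 0" using strat_C1[OF assms(1,2)] C1_div[OF assms(1,2)] yy_left by simp
  then show "\<forall>j<m. \<bar>\<phi> t - yy (strat f t)\<bar> \<le> \<bar>\<phi> t - yy j\<bar>" using phi_C0[OF assms(1)] by simp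
qed

lemma ne_C3: assumes "P0 \<le> t" "t \<le> P0 + aa" "j < m" shows "UD f t j \<le> U f t"
proof (rule ne_near[OF sv_C3[OF assms(1,2)] _ assms(3)])
  show "\<forall>j<m. \<bar>\<phi> t - yy (strat f t)\<bar> \<le> \<bar>\<phi> t - yy j\<bar>"
    by (simp add: phi_C3[OF assms(1,2)] strat_C3[OF assms(1,2)] yy_j0)
qed

lemma ne_M: assumes "j < m" shows "UD f Mr j \<le> U f Mr"
proof (rule ne_near[OF sv_M _ assms])
  have d: "\<bar>\<phi> Mr - yy (strat f Mr)\<bar> = 1/10" by (cases f) (simp_all add: phi_M strat_M yy_j0 yy_j1')
  show "\<forall>j<m. \<bar>\<phi> Mr - yy (strat f Mr)\<bar> \<le> \<bar>\<phi> Mr - yy j\<bar>"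
  proof (intro allI impI)
    fix j assume "j < m"
    then have "1/10 \<le> \<bar>\<phi> Mr - yy j\<bar>" using yy_cases[of j] by (auto simp: phi_M)
    then show "\<bar>\<phi> Mr - yy (strat f Mr)\<bar> \<le> \<bar>\<phi> Mr - yy j\<bar>" using d by simp
  qed
qed

lemma ne_C5: assumes "Mr < t" "t \<le> Q0" "j < m" shows "UD f t j \<le> U f t"
proof (rule ne_near[OF sv_C5[OF assms(1,2)] _ assms(3)])
  show "\<forall>j<m. \<bar>\<phi> t - yy (strat f t)\<bar> \<le> \<bar>\<phi> t - yy j\<bar>"
    by (simp add: phi_C5[OF assms(1,2)] strat_C5[OF assms(1,2)] yy_j1')
qed

lemma ne_C6: assumes "Q0 < t" "t < R0" "j < m" shows "UD f t j \<le> U f t"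
proof (rule ne_near[OF sv_C6[OF assms(1,2)] _ assms(3)])
  have "yy (strat f t) = 1" using strat_C6[OF assms(1,2)] C6_div[OF assms(1,2)] yy_right by simp
  then show "\<forall>j<m. \<bar>\<phi> t - yy (strat f t)\<bar> \<le> \<bar>\<phi> t - yy j\<bar>" using phi_C6[OF assms(1)] by simp
qed

lemma ne_C2: assumes t: "t < P0" "j0 * k \<le> t" and j: "j < m" shows "UD f t j \<le> U f t"
proof -
  have st: "strat f t = j0" using strat_C2[OF t] .
  have pt: "\<phi> t = 0" using phi_C0[OF t(1)] .
  have tn: "t < n" using t(1) plt[of j0] j0m by (simp add: P0_def)
  consider "j < j0" | "j = j0" | "j = j0 + 1" | "j0 + 1 < j" by linarith
  then show ?thesis
  proof cases
    case 1
    define B where "B = {j * k..<j * k + k}"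
    have "UD f t j = 0"
    proof (rule dev_zero)
      show "finite B" by (simp add: B_def)
      show "k \<le> card B" by (simp add: B_def)
      show "B \<subseteq> {a. a < n \<and> a \<noteq> t \<and> strat f a = j \<and> beats (\<lambda>i. i) \<phi> (yy j) a t}"
      proof
        fix a assume a: "a \<in> B"
        have "j * k + k \<le> j0 * k" using 1 by (metis add.commute mult_Suc mult_le_mono1 Suc_leI)
        then have at: "a < t" "a < j0 * k" using a t by (auto simp: B_def)
        then have aP: "a < P0" using t by simp
        have "a div k = j"
        proof -
          define r where "r = a - j * k"
          have "a = j * k + r" "r < k" using a by (auto simp: B_def r_def)
          then show ?thesis using k2 by simp
        qed
        then have "strat f a = j" using strat_C1[OF aP at(2)] by simp
        then show "a \<in> {a. a < n \<and> a \<noteq> t \<and> strat f a = j \<and> beats (\<lambda>i. i) \<phi> (yy j) a t}"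
          using at tn pt phi_C0[OF aP] yy_left[OF 1] by (simp add: beats_id)
      qed
    qed
    then show ?thesis using U_ge0 by simp
  next
    case 2
    have "(strat f)(t := j) = strat f" using st 2 by auto
    then show ?thesis by simp
  next
    case 3
    have "UD f t (j0 + 1) = 0"
    proof (rule KR_dev_zero)
      show "t < n" by (rule tn)
      show "t \<notin> KR f" using t P0_le_Mr Mr_lt Q0_lt_R0 by (auto simp: KR_def)
      fix a assume "a \<in> KR f"
      then have "\<bar>\<phi> a - 9/10\<bar> \<le> 1/10" using KR_mem by blast
      then show "beats (\<lambda>i. i) \<phi> (9/10) a t" using pt by (simp add: beats_id)
    qed
    then show ?thesis using 3 U_ge0 by simp
  next
    case 4
    have "UD f t j \<le> 0" by (rule dev_far) (simp add: pt yy_right[OF 4 j])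
    then show ?thesis using U_ge0 order.trans by blast
  qed
qed

lemma ne_R: assumes t: "R0 \<le> t" "t < Dr \<or> (t = Dr \<and> \<not> f)" and j: "j < m" shows "UD f t j \<le> U f t"
proof -
  have st: "strat f t = j0 + 1" using strat_C7 strat_D t by auto
  have pt: "\<phi> t = 1" using phi_C6 t Q0_lt_R0 by simp
  have tn: "t < n" using t Dr_lt by auto
  have U9: "U f t = 9/10" using U_served[OF sv_R[OF t]] st pt by (simp add: yy_j1')
  consider "j < j0" | "j = j0" | "j = j0 + 1" | "j0 + 1 < j" by linarith
  then show ?thesis
  proof cases
    case 1
    have "UD f t j \<le> 0" by (rule dev_far) (simp add: pt yy_left[OF 1])
    then show ?thesis using U9 by simp
  next
    case 2
    have "UD f t j \<le> 1 - \<bar>\<phi> t - yy j\<bar>" by (rule dev_le) (simp add: dist_le1)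
    then show ?thesis using U9 2 pt yy_j0 by simp
  next
    case 3
    have "(strat f)(t := j) = strat f" using st 3 by auto
    then show ?thesis by simp
  next
    case 4 then show ?thesis using right_dev_zero[OF 4 j t(1) tn] U9 by simp
  qed
qed

lemma ne_DT: assumes j: "j < m" shows "UD True Dr j \<le> U True Dr"
proof -
  have st: "strat True Dr = j0" using strat_D by simp
  have pt: "\<phi> Dr = 1" using phi_C6 R0_le_Dr Q0_lt_R0 by simp
  have U7: "U True Dr = 7/10" using U_served[OF sv_DT] st pt yy_j0 by simp
  consider "j < j0" | "j = j0" | "j = j0 + 1" | "j0 + 1 < j" by linarith
  then show ?thesis
  proof cases
    case 1
    have "UD True Dr j \<le> 0" by (rule dev_far) (simp add: pt yy_left[OF 1])
    then show ?thesis using U7 by simp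
  next
    case 2
    have "(strat True)(Dr := j) = strat True" using st 2 by auto
    then show ?thesis by simp
  next
    case 3
    have "UD True Dr (j0 + 1) = 0"
    proof (rule KR_dev_zero)
      show "Dr < n" by (rule Dr_lt)
      show "Dr \<notin> KR True" using KR_mem by blast
      fix a assume "a \<in> KR True"
      then have "\<bar>\<phi> a - 9/10\<bar> \<le> 1/10" "a < Dr" using KR_mem by blast+
      then show "beats (\<lambda>i. i) \<phi> (9/10) a Dr" using pt by (auto simp: beats_id)
    qed
    then show ?thesis using 3 U7 by simp
  next
    case 4 then show ?thesis using right_dev_zero[OF 4 j R0_le_Dr Dr_lt] U7 by simp
  qed
qed

lemma ne_C9: assumes t: "Dr < t" "t < n" and j: "j < m" shows "UD f t j \<le> U f t"
proof -
  have st: "strat f t = j0" using strat_C9[OF t(1)] .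
  have pt: "\<phi> t = 1" using phi_C6 t R0_le_Dr Q0_lt_R0 by simp
  consider "j < j0" | "j = j0" | "j = j0 + 1" | "j0 + 1 < j" by linarith
  then show ?thesis
  proof cases
    case 1
    have "UD f t j \<le> 0" by (rule dev_far) (simp add: pt yy_left[OF 1])
    then show ?thesis using U_ge0 order.trans by blast
  next
    case 2
    have "(strat f)(t := j) = strat f" using st 2 by auto
    then show ?thesis by simp
  next
    case 3
    have "UD f t (j0 + 1) = 0"
    proof (rule KR_dev_zero)
      show "t < n" by (rule t(2))
      show "t \<notin> KR f" using KR_mem t(1) by fastforce
      fix a assume "a \<in> KR f"
      then have "\<bar>\<phi> a - 9/10\<bar> \<le> 1/10" "a \<le> Dr" using KR_mem by blast+
      then show "beats (\<lambda>i. i) \<phi> (9/10) a t" using pt t(1) by (auto simp: beats_id)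
    qed
    then show ?thesis using 3 U_ge0 by simp
  next
    case 4 then show ?thesis using right_dev_zero[OF 4 j _ t(2)] t(1) R0_le_Dr U_ge0 by simp
  qed
qed

lemma ne_all: assumes t: "t < n" and j: "j < m" shows "UD f t j \<le> U f t"
proof (cases "t < P0")
  case True
  show ?thesis
  proof (cases "t < j0 * k")
    case True2: True
    show ?thesis by (rule ne_C1[OF True True2 j])
  next
    case False
    show ?thesis by (rule ne_C2[OF True _ j]) (use False in simp)
  qed
next
  case F1: False
  show ?thesis
  proof (cases "t \<le> P0 + aa")
    case True
    show ?thesis by (rule ne_C3[OF _ True j]) (use F1 in simp)
  next
    case F2: False
    show ?thesis
    proof (cases "t = Mr")
      case True
      show ?thesis unfolding True by (rule ne_M[OF j])
    next
      case F3: False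
      have mt: "Mr < t" using F2 F3 by (simp add: Mr_def)
      show ?thesis
      proof (cases "t \<le> Q0")
        case True
        show ?thesis by (rule ne_C5[OF mt True j])
      next
        case F4: False
        show ?thesis
        proof (cases "t < R0")
          case True
          show ?thesis by (rule ne_C6[OF _ True j]) (use F4 in simp)
        next
          case F5: False
          show ?thesis
          proof (cases "t < Dr \<or> (t = Dr \<and> \<not> f)")
            case True
            show ?thesis by (rule ne_R[OF _ True j]) (use F5 in simp)
          next
            case F6: False
            show ?thesis
            proof (cases "t = Dr")
              case True
              then have "f" using F6 by simp
              then show ?thesis using ne_DT[OF j] True by simp
            next
              case False
              then have "Dr < t" using F6 by simp
              then show ?thesis by (rule ne_C9[OF _ t j])
            qed
          qed
        qed
      qed
    qed
  qed
qed

lemma NE_strat: "is_NE m n k (\<lambda>i. i) \<phi> yy (strat f)"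
  unfolding is_NE_def using profile_strat ne_all by blast

end

context constr begin

lemma strat_same: "a \<noteq> Mr \<Longrightarrow> a \<noteq> Dr \<Longrightarrow> strat True a = strat False a"
  by (simp add: strat_def)

lemma leftover_eq:
  assumes t: "t < n" "t \<noteq> Mr" "t \<noteq> Dr" and st: "strat True t = j0"
    and bD: "beats (\<lambda>i. i) \<phi> (7/10) Dr t" and bM: "beats (\<lambda>i. i) \<phi> (7/10) Mr t"
  shows "U True t = U False t"
proof -
  have stF: "strat False t = j0" using st strat_same t by simp
  define X where "X = {a. a < n \<and> a \<noteq> t \<and> a \<noteq> Mr \<and> a \<noteq> Dr \<and> strat True a = j0 \<and> beats (\<lambda>i. i) \<phi> (7/10) a t}"
  have Mrn: "Mr < n" using Mr_lt plt[of "j0+1"] j0m by (simp add: Q0_def)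
  have eT: "{a \<in> {0..<n}. a \<noteq> t \<and> strat True a = strat True t \<and> beats (\<lambda>i. i) \<phi> (yy (strat True t)) a t}
      = insert Dr X"
    using st bD t Dr_lt strat_D strat_M by (auto simp: X_def yy_j0)
  have eF: "{a \<in> {0..<n}. a \<noteq> t \<and> strat False a = strat False t \<and> beats (\<lambda>i. i) \<phi> (yy (strat False t)) a t}
      = insert Mr X"
  proof (intro set_eqI iffI)
    fix a assume a: "a \<in> {a \<in> {0..<n}. a \<noteq> t \<and> strat False a = strat False t \<and> beats (\<lambda>i. i) \<phi> (yy (strat False t)) a t}"
    have "a \<noteq> Dr" using a stF strat_D[of False] by auto
    then show "a \<in> insert Mr X" using a stF strat_same[of a] by (auto simp: X_def yy_j0)
  next
    fix a assume a: "a \<in> insert Mr X"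
    show "a \<in> {a \<in> {0..<n}. a \<noteq> t \<and> strat False a = strat False t \<and> beats (\<lambda>i. i) \<phi> (yy (strat False t)) a t}"
    proof (cases "a = Mr")
      case True then show ?thesis using stF bM t Mrn strat_M[of False] by (simp add: yy_j0)
    next
      case False then show ?thesis using a stF strat_same[of a] by (auto simp: X_def yy_j0)
    qed
  qed
  have fX: "finite X" by (simp add: X_def)
  have "card (insert Dr X) = card (insert Mr X)" using fX by (simp add: X_def)
  then have "SV True t = SV False t" unfolding served_def using eT eF by simp
  then show ?thesis using st stF by (simp add: util_def)
qed

lemma U_eq: assumes t: "t < n" "t \<noteq> Dr" shows "U True t = U False t"
proof (cases "t < P0")
  case True
  show ?thesis
  proof (cases "t < j0 * k")
    case True2: True
    show ?thesis using sv_C1[OF True True2] strat_C1[OF True True2] by (simp add: util_def)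
  next
    case False
    show ?thesis
    proof (rule leftover_eq[OF t(1) _ t(2)])
      show "t \<noteq> Mr" using True P0_le_Mr by simp
      show "strat True t = j0" using strat_C2 True False by simp
      show "beats (\<lambda>i. i) \<phi> (7/10) Dr t" "beats (\<lambda>i. i) \<phi> (7/10) Mr t"
        using phi_C0[OF True] phi_M phi_C6[of Dr] R0_le_Dr Q0_lt_R0 by (simp_all add: beats_id)
    qed
  qed
next
  case F1: False
  show ?thesis
  proof (cases "t \<le> P0 + aa")
    case True
    then show ?thesis using sv_C3[of t] strat_C3[of t] F1 by (simp add: util_def)
  next
    case F2: False
    show ?thesis
    proof (cases "t = Mr")
      case True
      show ?thesis using sv_M[of True] sv_M[of False] strat_M unfolding True
        by (simp add: util_def phi_M yy_j0 yy_j1')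
    next
      case F3: False
      have mt: "Mr < t" using F2 F3 by (simp add: Mr_def)
      show ?thesis
      proof (cases "t \<le> Q0")
        case True
        then show ?thesis using sv_C5[OF mt] strat_C5[OF mt] by (simp add: util_def)
      next
        case F4: False
        show ?thesis
        proof (cases "t < R0")
          case True
          then show ?thesis using sv_C6[of t] strat_C6[of t] F4 by (simp add: util_def)
        next
          case F5: False
          show ?thesis
          proof (cases "t < Dr")
            case True
            then show ?thesis using sv_R[of t True] sv_R[of t False] strat_C7[of t] F5 by (simp add: util_def)
          next
            case False
            then have dt: "Dr < t" using t(2) by simp
            show ?thesis
            proof (rule leftover_eq[OF t(1) F3 t(2)])
              show "strat True t = j0" using strat_C9[OF dt] .
              have pt: "\<phi> t = 1" using phi_C6[of t] dt R0_le_Dr Q0_lt_R0 by simp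
              show "beats (\<lambda>i. i) \<phi> (7/10) Dr t" "beats (\<lambda>i. i) \<phi> (7/10) Mr t"
                using pt dt phi_M phi_C6[of Dr] R0_le_Dr Q0_lt_R0 by (simp_all add: beats_id)
            qed
          qed
        qed
      qed
    qed
  qed
qed

lemma U_Dr: "U True Dr = 7/10" "U False Dr = 9/10"
proof -
  have pt: "\<phi> Dr = 1" using phi_C6 R0_le_Dr Q0_lt_R0 by simp
  show "U True Dr = 7/10" using sv_DT strat_D pt by (simp add: util_def yy_j0)
  have "SV False Dr" using sv_R[of Dr False] R0_le_Dr by simp
  then show "U False Dr = 9/10" using strat_D pt by (simp add: util_def yy_j1')
qed

lemma SW_diff: "SW n k (\<lambda>i. i) \<phi> yy (strat True) \<noteq> SW n k (\<lambda>i. i) \<phi> yy (strat False)"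
proof -
  have D: "Dr \<in> {..<n}" using Dr_lt by simp
  have "SW n k (\<lambda>i. i) \<phi> yy (strat True) = U True Dr + (\<Sum>t\<in>{..<n} - {Dr}. U True t)"
    unfolding SW_def using D by (simp add: sum.remove)
  moreover have "SW n k (\<lambda>i. i) \<phi> yy (strat False) = U False Dr + (\<Sum>t\<in>{..<n} - {Dr}. U False t)"
    unfolding SW_def using D by (simp add: sum.remove)
  moreover have "(\<Sum>t\<in>{..<n} - {Dr}. U True t) = (\<Sum>t\<in>{..<n} - {Dr}. U False t)"
    by (rule sum.cong) (auto intro: U_eq)
  ultimately show ?thesis using U_Dr by simp
qed

end

lemma util_cong_s:
  assumes "\<forall>a<n. s a = s' a" "i < n"
  shows "util n k pr x y s i = util n k pr x y s' i"
proof -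
  have "{a \<in> {0..<n}. a \<noteq> i \<and> s a = s i \<and> beats pr x (y (s i)) a i}
      = {a \<in> {0..<n}. a \<noteq> i \<and> s' a = s' i \<and> beats pr x (y (s' i)) a i}"
    using assms by auto
  then show ?thesis using assms by (simp add: util_def served_def)
qed

lemma util_cong_y: "y (s i) = y' (s i) \<Longrightarrow> util n k pr x y s i = util n k pr x y' s i"
  by (simp add: util_def served_def)

lemma NE_cong_y:
  assumes "\<forall>j<m. y j = y' j" "is_NE m n k pr x y s"
  shows "is_NE m n k pr x y' s"
proof -
  have prof: "profile m n s" using assms(2) by (simp add: is_NE_def)
  have "util n k pr x y' (s(i := j)) i \<le> util n k pr x y' s i" if "i < n" "j < m" for i j
  proof -
    have "util n k pr x y' (s(i := j)) i = util n k pr x y (s(i := j)) i"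
      using assms(1) that by (intro util_cong_y) simp
    also have "\<dots> \<le> util n k pr x y s i" using assms(2) that by (simp add: is_NE_def)
    also have "\<dots> = util n k pr x y' s i"
      using assms(1) prof that by (intro util_cong_y) (simp add: profile_def)
    finally show ?thesis .
  qed
  then show ?thesis using prof by (simp add: is_NE_def)
qed

lemma SW_cong_y:
  assumes "\<forall>j<m. y j = y' j" "profile m n s"
  shows "SW n k pr x y s = SW n k pr x y' s"
  unfolding SW_def using assms by (intro sum.cong refl util_cong_y) (simp add: profile_def)

lemma beats_refl: "beats pr (\<lambda>a. 1 - x a) (1 - yj) a b = beats pr x yj a b"
proof -
  have "\<bar>(1 - x c) - (1 - yj)\<bar> = \<bar>x c - yj\<bar>" for c by linarith
  then show ?thesis by (simp add: beats_def)
qed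

lemma util_refl:
  assumes s: "\<forall>a<n. s a < m" and i: "i < n"
  shows "util n k pr (\<lambda>a. 1 - x a) (\<lambda>j. 1 - y (m - 1 - j)) (\<lambda>a. m - 1 - s a) i = util n k pr x y s i"
proof -
  have "m - 1 - (m - 1 - s i) = s i" using s i by auto
  then have yi: "1 - y (m - 1 - (m - 1 - s i)) = 1 - y (s i)" by simp
  have "{a \<in> {0..<n}. a \<noteq> i \<and> m - 1 - s a = m - 1 - s i \<and> beats pr (\<lambda>a. 1 - x a) (1 - y (m - 1 - (m - 1 - s i))) a i}
      = {a \<in> {0..<n}. a \<noteq> i \<and> s a = s i \<and> beats pr x (y (s i)) a i}"
  proof -
    have eqv: "(m - 1 - s a = m - 1 - s i) = (s a = s i)" if "a < n" for a
    proof -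
      have "s a < m" "s i < m" using s i that by auto
      then show ?thesis by linarith
    qed
    show ?thesis unfolding yi beats_refl using eqv by auto
  qed
  moreover have "\<bar>(1 - x i) - (1 - y (m - 1 - (m - 1 - s i)))\<bar> = \<bar>x i - y (s i)\<bar>" using yi by linarith
  ultimately show ?thesis by (simp add: util_def served_def)
qed

lemma NE_refl:
  assumes ne: "is_NE m n k pr x y s" and m0: "0 < m"
  shows "is_NE m n k pr (\<lambda>a. 1 - x a) (\<lambda>j. 1 - y (m - 1 - j)) (\<lambda>a. m - 1 - s a)"
proof -
  have sm: "\<forall>a<n. s a < m" using ne by (simp add: is_NE_def profile_def)
  have prof: "profile m n (\<lambda>a. m - 1 - s a)" using m0 by (simp add: profile_def)
  have key: "util n k pr (\<lambda>a. 1 - x a) (\<lambda>j. 1 - y (m - 1 - j)) ((\<lambda>a. m - 1 - s a)(i := j)) i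
      \<le> util n k pr (\<lambda>a. 1 - x a) (\<lambda>j. 1 - y (m - 1 - j)) (\<lambda>a. m - 1 - s a) i" if i: "i < n" and j: "j < m" for i j
  proof -
    define s' where "s' = s(i := m - 1 - j)"
    have s'm: "\<forall>a<n. s' a < m" using sm j by (simp add: s'_def)
    have eq: "(\<lambda>a. m - 1 - s a)(i := j) = (\<lambda>a. m - 1 - s' a)" using j by (auto simp: s'_def)
    have "util n k pr (\<lambda>a. 1 - x a) (\<lambda>j. 1 - y (m - 1 - j)) ((\<lambda>a. m - 1 - s a)(i := j)) i
        = util n k pr x y s' i" unfolding eq by (rule util_refl[OF s'm i])
    also have "\<dots> \<le> util n k pr x y s i"
    proof -
      have mj: "m - 1 - j < m" using j by simp
      have all: "\<And>i j. i < n \<Longrightarrow> j < m \<Longrightarrow> util n k pr x y (s(i:=j)) i \<le> util n k pr x y s i"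
        using ne by (simp add: is_NE_def)
      show ?thesis unfolding s'_def by (rule all[OF i mj])
    qed
    also have "\<dots> = util n k pr (\<lambda>a. 1 - x a) (\<lambda>j. 1 - y (m - 1 - j)) (\<lambda>a. m - 1 - s a) i"
      by (rule util_refl[OF sm i, symmetric])
    finally show ?thesis .
  qed
  show ?thesis unfolding is_NE_def using prof key by blast
qed

lemma SW_refl:
  assumes "\<forall>a<n. s a < m"
  shows "SW n k pr (\<lambda>a. 1 - x a) (\<lambda>j. 1 - y (m - 1 - j)) (\<lambda>a. m - 1 - s a) = SW n k pr x y s"
  unfolding SW_def by (rule sum.cong[OF refl]) (rule util_refl[OF assms], simp)

lemma util_rename:
  assumes bij: "bij_betw \<rho> {0..<n} {0..<n}"
    and ord: "\<forall>a b. a < n \<longrightarrow> b < n \<longrightarrow> (pr a < pr b \<longleftrightarrow> \<rho> a < \<rho> b)"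
    and i: "i < n"
  shows "util n k pr (\<lambda>a. X (\<rho> a)) y (\<lambda>a. S (\<rho> a)) i = util n k (\<lambda>t. t) X y S (\<rho> i)"
proof -
  let ?A = "{a \<in> {0..<n}. a \<noteq> i \<and> S (\<rho> a) = S (\<rho> i) \<and> beats pr (\<lambda>a. X (\<rho> a)) (y (S (\<rho> i))) a i}"
  let ?B = "{b \<in> {0..<n}. b \<noteq> \<rho> i \<and> S b = S (\<rho> i) \<and> beats (\<lambda>t. t) X (y (S (\<rho> i))) b (\<rho> i)}"
  have inj: "inj_on \<rho> {0..<n}" using bij by (simp add: bij_betw_def)
  have img: "\<rho> ` {0..<n} = {0..<n}" using bij by (simp add: bij_betw_def)
  have "\<rho> ` ?A = ?B"
  proof
    show "\<rho> ` ?A \<subseteq> ?B"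
    proof
      fix b assume "b \<in> \<rho> ` ?A"
      then obtain a where a: "a \<in> ?A" "b = \<rho> a" by auto
      have "\<rho> a \<noteq> \<rho> i" using a inj i by (auto dest: inj_onD)
      moreover have "\<rho> a < n" using a img by auto
      ultimately show "b \<in> ?B" using a ord i by (auto simp: beats_def)
    qed
    show "?B \<subseteq> \<rho> ` ?A"
    proof
      fix b assume b: "b \<in> ?B"
      then have "b \<in> \<rho> ` {0..<n}" using img by auto
      then obtain a where a: "a < n" "b = \<rho> a" by auto
      have "a \<noteq> i" using b a by auto
      then have "a \<in> ?A" using a b ord i by (auto simp: beats_def)
      then show "b \<in> \<rho> ` ?A" using a by auto
    qed
  qed
  moreover have "card (\<rho> ` ?A) = card ?A" by (rule card_image) (rule inj_on_subset[OF inj], auto)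
  ultimately have "card ?A = card ?B" by simp
  then show ?thesis by (simp add: util_def served_def)
qed

lemma NE_rename:
  assumes bij: "bij_betw \<rho> {0..<n} {0..<n}"
    and ord: "\<forall>a b. a < n \<longrightarrow> b < n \<longrightarrow> (pr a < pr b \<longleftrightarrow> \<rho> a < \<rho> b)"
    and ne: "is_NE m n k (\<lambda>t. t) X y S"
  shows "is_NE m n k pr (\<lambda>a. X (\<rho> a)) y (\<lambda>a. S (\<rho> a))"
proof -
  have img: "\<rho> ` {0..<n} = {0..<n}" using bij by (simp add: bij_betw_def)
  have inj: "inj_on \<rho> {0..<n}" using bij by (simp add: bij_betw_def)
  have rlt: "\<rho> a < n" if "a < n" for a using img that by auto
  have prof: "profile m n (\<lambda>a. S (\<rho> a))" using ne rlt by (simp add: is_NE_def profile_def)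
  have "util n k pr (\<lambda>a. X (\<rho> a)) y ((\<lambda>a. S (\<rho> a))(i := j)) i \<le> util n k pr (\<lambda>a. X (\<rho> a)) y (\<lambda>a. S (\<rho> a)) i"
    if i: "i < n" and j: "j < m" for i j
  proof -
    have ag: "\<forall>a<n. ((\<lambda>a. S (\<rho> a))(i := j)) a = (\<lambda>a. (S(\<rho> i := j)) (\<rho> a)) a"
      using inj i by (auto dest: inj_onD)
    have "util n k pr (\<lambda>a. X (\<rho> a)) y ((\<lambda>a. S (\<rho> a))(i := j)) i
        = util n k pr (\<lambda>a. X (\<rho> a)) y (\<lambda>a. (S(\<rho> i := j)) (\<rho> a)) i" by (rule util_cong_s[OF ag i])
    also have "\<dots> = util n k (\<lambda>t. t) X y (S(\<rho> i := j)) (\<rho> i)" by (rule util_rename[OF bij ord i])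
    also have "\<dots> \<le> util n k (\<lambda>t. t) X y S (\<rho> i)" using ne rlt[OF i] j by (simp add: is_NE_def)
    also have "\<dots> = util n k pr (\<lambda>a. X (\<rho> a)) y (\<lambda>a. S (\<rho> a)) i" by (rule util_rename[OF bij ord i, symmetric])
    finally show ?thesis .
  qed
  then show ?thesis using prof by (simp add: is_NE_def)
qed

lemma SW_rename:
  assumes bij: "bij_betw \<rho> {0..<n} {0..<n}"
    and ord: "\<forall>a b. a < n \<longrightarrow> b < n \<longrightarrow> (pr a < pr b \<longleftrightarrow> \<rho> a < \<rho> b)"
  shows "SW n k pr (\<lambda>a. X (\<rho> a)) y (\<lambda>a. S (\<rho> a)) = SW n k (\<lambda>t. t) X y S"
proof -
  have "SW n k pr (\<lambda>a. X (\<rho> a)) y (\<lambda>a. S (\<rho> a)) = (\<Sum>i\<in>{0..<n}. util n k (\<lambda>t. t) X y S (\<rho> i))"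
    unfolding SW_def using util_rename[OF bij ord] by (simp add: lessThan_atLeast0)
  also have "\<dots> = (\<Sum>t\<in>{0..<n}. util n k (\<lambda>t. t) X y S t)"
    by (rule sum.reindex_bij_betw[OF bij])
  finally show ?thesis by (simp add: SW_def lessThan_atLeast0)
qed

definition rk :: "(nat \<Rightarrow> nat) \<Rightarrow> nat \<Rightarrow> nat \<Rightarrow> nat" where
  "rk pr n i = card {a \<in> {0..<n}. pr a < pr i}"

lemma rk_props:
  assumes inj: "inj_on pr {0..<n}"
  shows "bij_betw (rk pr n) {0..<n} {0..<n}"
    "\<forall>a b. a < n \<longrightarrow> b < n \<longrightarrow> (pr a < pr b \<longleftrightarrow> rk pr n a < rk pr n b)"
proof -
  have tot: "pr a < pr b \<or> pr b < pr a" if "a < n" "b < n" "a \<noteq> b" for a b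
  proof -
    have "pr a \<noteq> pr b"
    proof
      assume "pr a = pr b"
      then have "a = b" using inj that by (auto dest: inj_onD)
      then show False using that by simp
    qed
    then show ?thesis by linarith
  qed
  have im: "(\<lambda>c. card {a \<in> {0..<n}. pr a < pr c}) ` {0..<n} = {..<card {0..<n}}"
  proof (rule rank_image)
    show "finite {0..<n}" by simp
    show "\<And>a. a \<in> {0..<n} \<Longrightarrow> \<not> pr a < pr a" by simp
    show "\<And>a b c. a \<in> {0..<n} \<Longrightarrow> b \<in> {0..<n} \<Longrightarrow> c \<in> {0..<n} \<Longrightarrow> pr a < pr b \<Longrightarrow> pr b < pr c \<Longrightarrow> pr a < pr c"
      by simp
    show "\<And>a b. a \<in> {0..<n} \<Longrightarrow> b \<in> {0..<n} \<Longrightarrow> a \<noteq> b \<Longrightarrow> pr a < pr b \<or> pr b < pr a"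
      using tot by simp
  qed
  have ij: "inj_on (\<lambda>c. card {a \<in> {0..<n}. pr a < pr c}) {0..<n}"
  proof (rule rank_inj)
    show "finite {0..<n}" by simp
    show "\<And>a. a \<in> {0..<n} \<Longrightarrow> \<not> pr a < pr a" by simp
    show "\<And>a b c. a \<in> {0..<n} \<Longrightarrow> b \<in> {0..<n} \<Longrightarrow> c \<in> {0..<n} \<Longrightarrow> pr a < pr b \<Longrightarrow> pr b < pr c \<Longrightarrow> pr a < pr c"
      by simp
    show "\<And>a b. a \<in> {0..<n} \<Longrightarrow> b \<in> {0..<n} \<Longrightarrow> a \<noteq> b \<Longrightarrow> pr a < pr b \<or> pr b < pr a"
      using tot by simp
  qed
  show "bij_betw (rk pr n) {0..<n} {0..<n}"
    unfolding bij_betw_def rk_def using im ij by (auto simp: lessThan_atLeast0)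
  have lt: "rk pr n a < rk pr n b" if "a < n" "b < n" "pr a < pr b" for a b
  proof -
    have "{c \<in> {0..<n}. pr c < pr a} \<subset> {c \<in> {0..<n}. pr c < pr b}" using that by auto
    then show ?thesis unfolding rk_def by (intro psubset_card_mono) auto
  qed
  show "\<forall>a b. a < n \<longrightarrow> b < n \<longrightarrow> (pr a < pr b \<longleftrightarrow> rk pr n a < rk pr n b)"
  proof (intro allI impI iffI)
    fix a b assume "a < n" "b < n" "pr a < pr b" then show "rk pr n a < rk pr n b" using lt by blast
  next
    fix a b assume ab: "a < n" "b < n" "rk pr n a < rk pr n b"
    show "pr a < pr b"
    proof (rule ccontr)
      assume "\<not> pr a < pr b"
      then have "pr b < pr a \<or> a = b" using tot[of a b] ab by auto
      then show False using lt ab by fastforce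
    qed
  qed
qed

lemma sort_perm_nth:
  fixes \<Psi> :: "nat \<Rightarrow> real"
  assumes mono: "\<And>u u'. u \<le> u' \<Longrightarrow> \<Psi> u \<le> \<Psi> u'"
    and bij: "bij_betw \<pi> {0..<n} {0..<n}"
    and q: "q < n"
  shows "sort (map (\<lambda>a. \<Psi> (\<pi> a)) [0..<n]) ! q = \<Psi> q"
proof -
  have inj: "inj_on \<pi> {0..<n}" and img: "\<pi> ` {0..<n} = {0..<n}" using bij by (auto simp: bij_betw_def)
  have c1: "card {a. a < n \<and> \<Psi> (\<pi> a) < \<Psi> q} \<le> q"
  proof -
    have sub: "{a. a < n \<and> \<Psi> (\<pi> a) < \<Psi> q} \<subseteq> {a. a < n \<and> \<pi> a < q}"
    proof
      fix a assume a: "a \<in> {a. a < n \<and> \<Psi> (\<pi> a) < \<Psi> q}"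
      have "\<pi> a < q"
      proof (rule ccontr)
        assume "\<not> \<pi> a < q"
        then have "\<Psi> q \<le> \<Psi> (\<pi> a)" by (intro mono) simp
        then show False using a by simp
      qed
      then show "a \<in> {a. a < n \<and> \<pi> a < q}" using a by simp
    qed
    have "\<pi> ` {a. a < n \<and> \<pi> a < q} \<subseteq> {..<q}" by auto
    then have "card (\<pi> ` {a. a < n \<and> \<pi> a < q}) \<le> q" by (metis card_lessThan card_mono finite_lessThan)
    moreover have "card (\<pi> ` {a. a < n \<and> \<pi> a < q}) = card {a. a < n \<and> \<pi> a < q}"
      by (rule card_image) (rule inj_on_subset[OF inj], auto)
    moreover have "card {a. a < n \<and> \<Psi> (\<pi> a) < \<Psi> q} \<le> card {a. a < n \<and> \<pi> a < q}"
      by (rule card_mono[OF _ sub]) simp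
    ultimately show ?thesis by linarith
  qed
  have c2: "q < card {a. a < n \<and> \<Psi> (\<pi> a) \<le> \<Psi> q}"
  proof -
    have "{..q} \<subseteq> \<pi> ` {a. a < n \<and> \<pi> a \<le> q}"
    proof
      fix u assume "u \<in> {..q}"
      then have "u \<in> \<pi> ` {0..<n}" using img q by auto
      then show "u \<in> \<pi> ` {a. a < n \<and> \<pi> a \<le> q}" using \<open>u \<in> {..q}\<close> by auto
    qed
    then have "card {..q} \<le> card (\<pi> ` {a. a < n \<and> \<pi> a \<le> q})" by (intro card_mono) auto
    also have "\<dots> = card {a. a < n \<and> \<pi> a \<le> q}"
      by (rule card_image) (rule inj_on_subset[OF inj], auto)
    also have "\<dots> \<le> card {a. a < n \<and> \<Psi> (\<pi> a) \<le> \<Psi> q}"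
    proof (rule card_mono)
      show "finite {a. a < n \<and> \<Psi> (\<pi> a) \<le> \<Psi> q}" by simp
      show "{a. a < n \<and> \<pi> a \<le> q} \<subseteq> {a. a < n \<and> \<Psi> (\<pi> a) \<le> \<Psi> q}"
      proof
        fix a assume "a \<in> {a. a < n \<and> \<pi> a \<le> q}"
        then show "a \<in> {a. a < n \<and> \<Psi> (\<pi> a) \<le> \<Psi> q}" using mono[of "\<pi> a" q] by simp
      qed
    qed
    finally show ?thesis by simp
  qed
  have "sort (map (\<lambda>a. \<Psi> (\<pi> a)) [0..<n]) ! q \<le> \<Psi> q" using sort_nth_le[OF q] c2 by blast
  moreover have "\<not> sort (map (\<lambda>a. \<Psi> (\<pi> a)) [0..<n]) ! q < \<Psi> q" using sort_nth_lt[OF q] c1 by fastforce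
  ultimately show ?thesis by simp
qed

context constr begin
lemma phi_mono: "u \<le> u' \<Longrightarrow> \<phi> u \<le> \<phi> u'"
  unfolding \<phi>_def using P0_le_Mr Mr_lt by (auto simp: Mr_def)
end

lemma constr_result:
  assumes "constr n m k p j0"
  shows "\<exists>X S1 S2. (\<forall>t. 0 \<le> X t \<and> X t \<le> 1) \<and> (\<forall>u u'. u \<le> u' \<longrightarrow> X u \<le> X u')
     \<and> is_NE m n k (\<lambda>t. t) X (\<lambda>j. X (p j)) S1 \<and> is_NE m n k (\<lambda>t. t) X (\<lambda>j. X (p j)) S2
     \<and> SW n k (\<lambda>t. t) X (\<lambda>j. X (p j)) S1 \<noteq> SW n k (\<lambda>t. t) X (\<lambda>j. X (p j)) S2"
proof -
  interpret c: constr n m k p j0 by (rule assms)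
  have yy: "c.yy = (\<lambda>j. c.\<phi> (p j))" by (simp add: c.yy_def fun_eq_iff)
  show ?thesis
    apply (rule exI[where x = c.\<phi>], rule exI[where x = "c.strat True"], rule exI[where x = "c.strat False"])
    using c.phi_01 c.phi_mono c.NE_strat c.SW_diff unfolding yy by blast
qed

lemma PM_eq:
  fixes \<Psi> :: "nat \<Rightarrow> real"
  assumes mono: "\<And>u u'. u \<le> u' \<Longrightarrow> \<Psi> u \<le> \<Psi> u'"
    and bij: "bij_betw \<pi> {0..<n} {0..<n}"
    and px: "\<forall>a<n. x a = \<Psi> (\<pi> a)"
    and pj: "p j = nat \<lfloor>v j * real (n - 1)\<rfloor>" "p j < n"
  shows "PM n v x j = \<Psi> (p j)"
proof -
  have meq: "map x [0..<n] = map (\<lambda>a. \<Psi> (\<pi> a)) [0..<n]" using px by simp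
  have "PM n v x j = sort (map x [0..<n]) ! p j" by (simp add: PM_nth pj(1))
  also have "\<dots> = sort (map (\<lambda>a. \<Psi> (\<pi> a)) [0..<n]) ! p j" by (simp only: meq)
  also have "\<dots> = \<Psi> (p j)" by (rule sort_perm_nth[OF mono bij pj(2)])
  finally show ?thesis .
qed

lemma not_ES_R:
  assumes con: "constr n m k p j0" and inj: "inj_on pr {0..<n}"
    and pdef: "\<forall>j<m. p j = nat \<lfloor>v j * real (n - 1)\<rfloor> \<and> p j < n"
  shows "\<not> equilibrium_stable m n k pr (PM n v)"
proof
  assume es: "equilibrium_stable m n k pr (PM n v)"
  obtain X S1 S2 where X01: "\<forall>t. 0 \<le> X t \<and> X t \<le> 1" and Xm: "\<forall>u u'. u \<le> u' \<longrightarrow> X u \<le> X u'"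
    and ne1: "is_NE m n k (\<lambda>t. t) X (\<lambda>j. X (p j)) S1" and ne2: "is_NE m n k (\<lambda>t. t) X (\<lambda>j. X (p j)) S2"
    and sw: "SW n k (\<lambda>t. t) X (\<lambda>j. X (p j)) S1 \<noteq> SW n k (\<lambda>t. t) X (\<lambda>j. X (p j)) S2"
    using constr_result[OF con] by blast
  define \<rho> where "\<rho> = rk pr n"
  have bij: "bij_betw \<rho> {0..<n} {0..<n}" and ord: "\<forall>a b. a < n \<longrightarrow> b < n \<longrightarrow> (pr a < pr b \<longleftrightarrow> \<rho> a < \<rho> b)"
    using rk_props[OF inj] by (simp_all add: \<rho>_def)
  define x where "x a = X (\<rho> a)" for a
  have vx: "valid_pos n x" using X01 by (simp add: valid_pos_def x_def)
  have yeq: "\<forall>j<m. X (p j) = PM n v x j"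
  proof (intro allI impI)
    fix j assume j: "j < m"
    show "X (p j) = PM n v x j"
      by (rule PM_eq[symmetric, where \<pi> = \<rho>]) (use Xm bij pdef j in \<open>auto simp: x_def\<close>)
  qed
  have n1: "is_NE m n k pr x (PM n v x) (\<lambda>a. S1 (\<rho> a))"
    by (rule NE_cong_y[OF yeq]) (unfold x_def, rule NE_rename[OF bij ord ne1])
  have n2: "is_NE m n k pr x (PM n v x) (\<lambda>a. S2 (\<rho> a))"
    by (rule NE_cong_y[OF yeq]) (unfold x_def, rule NE_rename[OF bij ord ne2])
  have p1: "profile m n (\<lambda>a. S1 (\<rho> a))" and p2: "profile m n (\<lambda>a. S2 (\<rho> a))"
    using n1 n2 by (simp_all add: is_NE_def)
  have "SW n k pr x (PM n v x) (\<lambda>a. S1 (\<rho> a)) = SW n k (\<lambda>t. t) X (\<lambda>j. X (p j)) S1"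
  proof -
    have "SW n k pr x (PM n v x) (\<lambda>a. S1 (\<rho> a)) = SW n k pr x (\<lambda>j. X (p j)) (\<lambda>a. S1 (\<rho> a))"
      using SW_cong_y[OF yeq p1] by simp
    also have "\<dots> = SW n k (\<lambda>t. t) X (\<lambda>j. X (p j)) S1" unfolding x_def by (rule SW_rename[OF bij ord])
    finally show ?thesis .
  qed
  moreover have "SW n k pr x (PM n v x) (\<lambda>a. S2 (\<rho> a)) = SW n k (\<lambda>t. t) X (\<lambda>j. X (p j)) S2"
  proof -
    have "SW n k pr x (PM n v x) (\<lambda>a. S2 (\<rho> a)) = SW n k pr x (\<lambda>j. X (p j)) (\<lambda>a. S2 (\<rho> a))"
      using SW_cong_y[OF yeq p2] by simp
    also have "\<dots> = SW n k (\<lambda>t. t) X (\<lambda>j. X (p j)) S2" unfolding x_def by (rule SW_rename[OF bij ord])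
    finally show ?thesis .
  qed
  moreover have "SW n k pr x (PM n v x) (\<lambda>a. S1 (\<rho> a)) = SW n k pr x (PM n v x) (\<lambda>a. S2 (\<rho> a))"
    using es vx n1 n2 unfolding equilibrium_stable_def by blast
  ultimately show False using sw by simp
qed

lemma rev_bij: "bij_betw (\<lambda>u. n - 1 - u) {0..<n} {0..<(n::nat)}"
  by (rule bij_betw_byWitness[where f'="\<lambda>u. n - 1 - u"]) auto

lemma not_ES_L:
  assumes con: "constr n m k (\<lambda>j. n - 1 - p (m - 1 - j)) j0'" and inj: "inj_on pr {0..<n}"
    and pdef: "\<forall>j<m. p j = nat \<lfloor>v j * real (n - 1)\<rfloor> \<and> p j < n" and m0: "0 < m"
  shows "\<not> equilibrium_stable m n k pr (PM n v)"
proof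
  assume es: "equilibrium_stable m n k pr (PM n v)"
  define p' where "p' j = n - 1 - p (m - 1 - j)" for j
  obtain X S1 S2 where X01: "\<forall>t. 0 \<le> X t \<and> X t \<le> 1" and Xm: "\<forall>u u'. u \<le> u' \<longrightarrow> X u \<le> X u'"
    and ne1: "is_NE m n k (\<lambda>t. t) X (\<lambda>j. X (p' j)) S1" and ne2: "is_NE m n k (\<lambda>t. t) X (\<lambda>j. X (p' j)) S2"
    and sw: "SW n k (\<lambda>t. t) X (\<lambda>j. X (p' j)) S1 \<noteq> SW n k (\<lambda>t. t) X (\<lambda>j. X (p' j)) S2"
    using constr_result[OF con] unfolding p'_def by blast
  define Y where "Y j = 1 - X (p' (m - 1 - j))" for j
  have r1: "is_NE m n k (\<lambda>t. t) (\<lambda>t. 1 - X t) Y (\<lambda>t. m - 1 - S1 t)"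
    using NE_refl[OF ne1 m0] unfolding Y_def .
  have r2: "is_NE m n k (\<lambda>t. t) (\<lambda>t. 1 - X t) Y (\<lambda>t. m - 1 - S2 t)"
    using NE_refl[OF ne2 m0] unfolding Y_def .
  define \<rho> where "\<rho> = rk pr n"
  have bij: "bij_betw \<rho> {0..<n} {0..<n}" and ord: "\<forall>a b. a < n \<longrightarrow> b < n \<longrightarrow> (pr a < pr b \<longleftrightarrow> \<rho> a < \<rho> b)"
    using rk_props[OF inj] by (simp_all add: \<rho>_def)
  have rlt: "\<rho> a < n" if "a < n" for a using bij that by (auto simp: bij_betw_def)
  define x where "x a = 1 - X (\<rho> a)" for a
  have vx: "valid_pos n x" using X01 by (simp add: valid_pos_def x_def)
  define \<Psi> where "\<Psi> u = 1 - X (n - 1 - u)" for u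
  define \<pi> where "\<pi> a = n - 1 - \<rho> a" for a
  have Pm: "\<And>u u'. u \<le> u' \<Longrightarrow> \<Psi> u \<le> \<Psi> u'"
  proof -
    fix u u' :: nat assume "u \<le> u'"
    then have "X (n - 1 - u') \<le> X (n - 1 - u)" using Xm by simp
    then show "\<Psi> u \<le> \<Psi> u'" by (simp add: \<Psi>_def)
  qed
  have pib: "bij_betw \<pi> {0..<n} {0..<n}"
    unfolding \<pi>_def using bij_betw_trans[OF bij rev_bij] by (simp add: comp_def)
  have px: "\<forall>a<n. x a = \<Psi> (\<pi> a)"
  proof (intro allI impI)
    fix a assume "a < n"
    then have "n - 1 - (n - 1 - \<rho> a) = \<rho> a" using rlt by fastforce
    then show "x a = \<Psi> (\<pi> a)" by (simp add: x_def \<Psi>_def \<pi>_def)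
  qed
  have yeq: "\<forall>j<m. Y j = PM n v x j"
  proof (intro allI impI)
    fix j assume j: "j < m"
    have "PM n v x j = \<Psi> (p j)" by (rule PM_eq[OF Pm pib px]) (use pdef j in auto)
    moreover have "m - 1 - (m - 1 - j) = j" using j by simp
    ultimately show "Y j = PM n v x j" by (simp add: Y_def p'_def \<Psi>_def)
  qed
  have n1: "is_NE m n k pr x (PM n v x) (\<lambda>a. m - 1 - S1 (\<rho> a))"
    by (rule NE_cong_y[OF yeq]) (unfold x_def, rule NE_rename[OF bij ord r1])
  have n2: "is_NE m n k pr x (PM n v x) (\<lambda>a. m - 1 - S2 (\<rho> a))"
    by (rule NE_cong_y[OF yeq]) (unfold x_def, rule NE_rename[OF bij ord r2])
  have p1: "profile m n (\<lambda>a. m - 1 - S1 (\<rho> a))" and p2: "profile m n (\<lambda>a. m - 1 - S2 (\<rho> a))"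
    using n1 n2 by (simp_all add: is_NE_def)
  have s1: "\<forall>a<n. S1 a < m" and s2: "\<forall>a<n. S2 a < m" using ne1 ne2 by (simp_all add: is_NE_def profile_def)
  have "SW n k pr x (PM n v x) (\<lambda>a. m - 1 - S1 (\<rho> a)) = SW n k (\<lambda>t. t) X (\<lambda>j. X (p' j)) S1"
  proof -
    have "SW n k pr x (PM n v x) (\<lambda>a. m - 1 - S1 (\<rho> a)) = SW n k pr x Y (\<lambda>a. m - 1 - S1 (\<rho> a))"
      using SW_cong_y[OF yeq p1] by simp
    also have "\<dots> = SW n k (\<lambda>t. t) (\<lambda>t. 1 - X t) Y (\<lambda>t. m - 1 - S1 t)"
      unfolding x_def by (rule SW_rename[OF bij ord])
    also have "\<dots> = SW n k (\<lambda>t. t) X (\<lambda>j. X (p' j)) S1"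
      unfolding Y_def by (rule SW_refl[OF s1])
    finally show ?thesis .
  qed
  moreover have "SW n k pr x (PM n v x) (\<lambda>a. m - 1 - S2 (\<rho> a)) = SW n k (\<lambda>t. t) X (\<lambda>j. X (p' j)) S2"
  proof -
    have "SW n k pr x (PM n v x) (\<lambda>a. m - 1 - S2 (\<rho> a)) = SW n k pr x Y (\<lambda>a. m - 1 - S2 (\<rho> a))"
      using SW_cong_y[OF yeq p2] by simp
    also have "\<dots> = SW n k (\<lambda>t. t) (\<lambda>t. 1 - X t) Y (\<lambda>t. m - 1 - S2 t)"
      unfolding x_def by (rule SW_rename[OF bij ord])
    also have "\<dots> = SW n k (\<lambda>t. t) X (\<lambda>j. X (p' j)) S2"
      unfolding Y_def by (rule SW_refl[OF s2])
    finally show ?thesis .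
  qed
  moreover have "SW n k pr x (PM n v x) (\<lambda>a. m - 1 - S1 (\<rho> a)) = SW n k pr x (PM n v x) (\<lambda>a. m - 1 - S2 (\<rho> a))"
    using es vx n1 n2 unfolding equilibrium_stable_def by blast
  ultimately show False using sw by simp
qed

lemma enough_split:
  fixes n m k j0 P0 Q0 :: nat
  assumes "m * k < n" "j0 + 1 < m" "P0 + 2 \<le> Q0" "Q0 + 2 \<le> P0 + 2 * k" "Q0 < n"
  shows "Q0 + 1 + (m - j0 - 2) * k + (k + 1 + (Q0 - P0 - k) - (Q0 - P0)) \<le> n
       \<or> j0 * k + (k + 1 + (Q0 - P0 - k) - (Q0 - P0)) \<le> P0"
proof (rule ccontr)
  assume c: "\<not> ?thesis"
  obtain r where r: "m = j0 + 2 + r" using assms(2) by (metis add.commute add_Suc_right le_Suc_ex less_iff_Suc_add one_add_one plus_1_eq_Suc Suc_leI)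
  have mk: "m * k = j0 * k + 2 * k + r * k" using r by (simp add: algebra_simps)
  have mj: "(m - j0 - 2) * k = r * k" using r by simp
  obtain g where g: "Q0 = P0 + g" using assms(3) by (metis le_add1 le_Suc_ex add.assoc)
  show False
  proof (cases "k \<le> g")
    case True
    then have "k + 1 + (Q0 - P0 - k) - (Q0 - P0) = 1" using g by simp
    then show False using c assms mk mj g True by linarith
  next
    case False
    then have "k + 1 + (Q0 - P0 - k) - (Q0 - P0) = k + 1 - g" using g by simp
    then show False using c assms mk mj g False by linarith
  qed
qed

theorem theorem8:
  fixes m n k :: nat and v :: "nat \<Rightarrow> real" and pr :: "nat \<Rightarrow> nat"
  assumes "m \<ge> 2" and "m * k < n"
    and "inj_on pr {0..<n}"
    and "\<forall>j<m. v j \<in> {0..1}"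
    and "\<forall>j. j + 1 < m \<longrightarrow> v j < v (j + 1)"
    and "\<forall>j. j + 1 < m \<longrightarrow>
           \<lfloor>v (j + 1) * real (n - 1)\<rfloor> - \<lfloor>v j * real (n - 1)\<rfloor> > 1"
  shows "equilibrium_stable m n k pr (PM n v) \<longleftrightarrow>
    (\<forall>j. j + 1 < m \<longrightarrow>
       \<lfloor>v (j + 1) * real (n - 1)\<rfloor> - \<lfloor>v j * real (n - 1)\<rfloor> \<ge> 2 * int k - 1)"
proof -
  note A = assms
  have n0: "0 < n" using A(2) by simp
  have m0: "0 < m" using A(1) by simp
  define p where "p j = nat \<lfloor>v j * real (n - 1)\<rfloor>" for j
  have pdef: "\<forall>j<m. p j = nat \<lfloor>v j * real (n - 1)\<rfloor> \<and> p j < n"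
    using pidx_lt[OF _ n0] A(4) by (auto simp: p_def)
  have fl0: "0 \<le> \<lfloor>v j * real (n - 1)\<rfloor>" if "j < m" for j using A(4) that by auto
  have pinc: "p j + 2 \<le> p (j + 1)" if j: "j + 1 < m" for j
  proof -
    have "\<lfloor>v (j + 1) * real (n - 1)\<rfloor> - \<lfloor>v j * real (n - 1)\<rfloor> > 1" using A(6) j by blast
    then show ?thesis using fl0[of j] j unfolding p_def by linarith
  qed
  show ?thesis
  proof
    assume es: "equilibrium_stable m n k pr (PM n v)"
    show "\<forall>j. j + 1 < m \<longrightarrow> \<lfloor>v (j + 1) * real (n - 1)\<rfloor> - \<lfloor>v j * real (n - 1)\<rfloor> \<ge> 2 * int k - 1"
    proof (rule ccontr)
      assume "\<not> ?thesis"
      then obtain j0 where j0m: "j0 + 1 < m"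
        and lt: "\<lfloor>v (j0 + 1) * real (n - 1)\<rfloor> - \<lfloor>v j0 * real (n - 1)\<rfloor> < 2 * int k - 1" by force
      have g2: "p j0 + 2 \<le> p (j0 + 1)" by (rule pinc[OF j0m])
      have gk: "p (j0 + 1) + 2 \<le> p j0 + 2 * k"
        using lt fl0[of j0] fl0[of "j0 + 1"] j0m unfolding p_def by linarith
      have Qn: "p (j0 + 1) < n" using pdef j0m by blast
      have pinc': "\<And>j. j + 1 < m \<Longrightarrow> p j < p (j + 1)" using pinc by fastforce
      have plt: "\<And>j. j < m \<Longrightarrow> p j < n" using pdef by blast
      from enough_split[OF A(2) j0m g2 gk Qn]
      show False
      proof
        assume en: "p (j0 + 1) + 1 + (m - j0 - 2) * k + (k + 1 + (p (j0 + 1) - p j0 - k) - (p (j0 + 1) - p j0)) \<le> n"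
        have "constr n m k p j0"
          by (unfold_locales) (use pinc' plt j0m g2 gk en in auto)
        then show False using not_ES_R[OF _ A(3) pdef] es by blast
      next
        assume en: "j0 * k + (k + 1 + (p (j0 + 1) - p j0 - k) - (p (j0 + 1) - p j0)) \<le> p j0"
        define j1 where "j1 = m - 2 - j0"
        have e1: "m - 1 - (j1 + 1) = j0" and e2: "m - 1 - j1 = j0 + 1" and e3: "m - j1 - 2 = j0"
          using j0m by (auto simp: j1_def)
        have P0n: "p j0 < n" using plt j0m by simp
        have "constr n m k (\<lambda>j. n - 1 - p (m - 1 - j)) j1"
        proof (unfold_locales)
          fix j assume j: "j + 1 < m"
          have "p (m - 1 - (j + 1)) < p (m - 1 - (j + 1) + 1)" using pinc'[of "m - 1 - (j + 1)"] j by simp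
          moreover have "m - 1 - (j + 1) + 1 = m - 1 - j" using j by simp
          moreover have "p (m - 1 - j) < n" using plt j by simp
          ultimately show "n - 1 - p (m - 1 - j) < n - 1 - p (m - 1 - (j + 1))" by simp
        next
          fix j assume "j < m" then show "n - 1 - p (m - 1 - j) < n" using n0 by simp
        next
          show "j1 + 1 < m" using j0m A(1) by (simp add: j1_def)
        next
          show "n - 1 - p (m - 1 - j1) + 2 \<le> n - 1 - p (m - 1 - (j1 + 1))"
            unfolding e1 e2 using g2 Qn by simp
        next
          show "n - 1 - p (m - 1 - (j1 + 1)) + 2 \<le> n - 1 - p (m - 1 - j1) + 2 * k"
            unfolding e1 e2 using gk Qn P0n by arith
        next
          have d: "n - 1 - p (m - 1 - (j1 + 1)) - (n - 1 - p (m - 1 - j1)) = p (j0 + 1) - p j0"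
            unfolding e1 e2 using g2 Qn by simp
          show "n - 1 - p (m - 1 - (j1 + 1)) + 1 + (m - j1 - 2) * k +
              (k + 1 + (n - 1 - p (m - 1 - (j1 + 1)) - (n - 1 - p (m - 1 - j1)) - k) -
               (n - 1 - p (m - 1 - (j1 + 1)) - (n - 1 - p (m - 1 - j1)))) \<le> n"
            unfolding d e3 unfolding e1 using en P0n by simp
        qed
        then show False using not_ES_L[OF _ A(3) pdef m0] es by blast
      qed
    qed
  next
    assume gaps: "\<forall>j. j + 1 < m \<longrightarrow> \<lfloor>v (j + 1) * real (n - 1)\<rfloor> - \<lfloor>v j * real (n - 1)\<rfloor> \<ge> 2 * int k - 1"
    show "equilibrium_stable m n k pr (PM n v)" by (rule ES_if[OF A(3) n0 m0 A(4) gaps])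
  qed
qed

end
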